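(* Let $n\in\mathbb{N}$ and $\omega\in H^2(\mathbb{Z}^2,\mathbb{T})\cong\mathbb{T}$. Then there exists a projective representation $u:\mathbb{Z}^2\to P\mathcal{U}(M_{n^\infty})$ with $\mathrm{ob}(u)=\omega$ if and only if $\omega^{n^l}=1$ for some $l\in\mathbb{N}$.
   Context: $M_{n^\infty}$ is the UHF algebra of infinite type $n^\infty$, $\mathcal{U}(A)$ the unitary group of a unital C$^*$-algebra $A$ and $P\mathcal{U}(A)=\mathcal{U}(A)/\mathbb{T}$. A projective representation of a discrete group $G$ on $A$ is a group homomorphism $u:G\to P\mathcal{U}(A)$, and $\mathrm{ob}(u)\in H^2(G,\mathbb{T})$ is the class of $\tilde u_g\tilde u_h\tilde u_{gh}^*$ for any lift $\tilde u$. The identification $H^2(\mathbb{Z}^2,\mathbb{T})\cong\mathbb{T}$ sends the class of a cocycle $\omega$ to the commutator scalar $\omega(a,b)\overline{\omega(b,a)}$ of the two standard generators $a,b$. *)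

theory Defs
  imports Complex_Main
begin

text \<open>Square complex matrices of size N are represented by functions
  nat => nat => complex, of which only the entries with indices < N matter.\<close>

type_synonym cmat = "nat \<Rightarrow> nat \<Rightarrow> complex"

definition mmul :: "nat \<Rightarrow> cmat \<Rightarrow> cmat \<Rightarrow> cmat" where
  "mmul N a b = (\<lambda>i j. \<Sum>l<N. a i l * b l j)"

definition madj :: "cmat \<Rightarrow> cmat" where
  "madj a = (\<lambda>i j. cnj (a j i))"

definition mone :: cmat where
  "mone = (\<lambda>i j. if i = j then 1 else 0)"

definition mdiff :: "cmat \<Rightarrow> cmat \<Rightarrow> cmat" where
  "mdiff a b = (\<lambda>i j. a i j - b i j)"

definition mscale :: "complex \<Rightarrow> cmat \<Rightarrow> cmat" where
  "mscale c a = (\<lambda>i j. c * a i j)"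

definition opnorm :: "nat \<Rightarrow> cmat \<Rightarrow> real" where
  "opnorm N a = Sup {sqrt (\<Sum>i<N. (cmod (\<Sum>j<N. a i j * v j))\<^sup>2) | v.
                      (\<Sum>j<N. (cmod (v j))\<^sup>2) \<le> 1}"

text \<open>The unital connecting *-homomorphism M_{n^j} -> M_{n^k} (j <= k), a |-> a (x) 1_{n^(k-j)}.\<close>
definition amp :: "nat \<Rightarrow> nat \<Rightarrow> nat \<Rightarrow> cmat \<Rightarrow> cmat" where
  "amp n j k a = (\<lambda>i i'. let m = n ^ (k - j) in
      if i mod m = i' mod m then a (i div m) (i' div m) else 0)"

text \<open>Elements of M_{n^infinity} (the C*-inductive limit of the M_{n^k}) are represented by
  sequences x with x k in M_{n^k} which are Cauchy for the C*-norm of the inductive limit;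
  two such sequences represent the same element iff their difference tends to 0 in norm.\<close>

definition uhf_elem :: "nat \<Rightarrow> (nat \<Rightarrow> cmat) \<Rightarrow> bool" where
  "uhf_elem n x \<longleftrightarrow> (\<forall>\<epsilon>>0. \<exists>K. \<forall>j\<ge>K. \<forall>k\<ge>j.
       opnorm (n ^ k) (mdiff (x k) (amp n j k (x j))) < \<epsilon>)"

definition uhf_eq :: "nat \<Rightarrow> (nat \<Rightarrow> cmat) \<Rightarrow> (nat \<Rightarrow> cmat) \<Rightarrow> bool" where
  "uhf_eq n x y \<longleftrightarrow> ((\<lambda>k. opnorm (n ^ k) (mdiff (x k) (y k))) \<longlonglongrightarrow> 0)"

definition uhf_mul :: "nat \<Rightarrow> (nat \<Rightarrow> cmat) \<Rightarrow> (nat \<Rightarrow> cmat) \<Rightarrow> (nat \<Rightarrow> cmat)" where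
  "uhf_mul n x y = (\<lambda>k. mmul (n ^ k) (x k) (y k))"

definition uhf_adj :: "(nat \<Rightarrow> cmat) \<Rightarrow> (nat \<Rightarrow> cmat)" where
  "uhf_adj x = (\<lambda>k. madj (x k))"

definition uhf_one :: "nat \<Rightarrow> cmat" where
  "uhf_one = (\<lambda>k. mone)"

definition uhf_scale :: "complex \<Rightarrow> (nat \<Rightarrow> cmat) \<Rightarrow> (nat \<Rightarrow> cmat)" where
  "uhf_scale c x = (\<lambda>k. mscale c (x k))"

definition uhf_unitary :: "nat \<Rightarrow> (nat \<Rightarrow> cmat) \<Rightarrow> bool" where
  "uhf_unitary n x \<longleftrightarrow> uhf_elem n x \<and>
     uhf_eq n (uhf_mul n (uhf_adj x) x) uhf_one \<and> uhf_eq n (uhf_mul n x (uhf_adj x)) uhf_one"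

type_synonym z2 = "int \<times> int"

definition z2add :: "z2 \<Rightarrow> z2 \<Rightarrow> z2" where
  "z2add g h = (fst g + fst h, snd g + snd h)"

text \<open>A projective representation u : Z^2 -> PU(M_{n^infinity}) is given through a lift
  ut : Z^2 -> U(M_{n^infinity}); u being a homomorphism means exactly that
  ut g * ut h = c g h * ut (g+h) with scalars c g h in T.  The 2-cocycle c represents ob(u).\<close>
definition proj_rep_lift :: "nat \<Rightarrow> (z2 \<Rightarrow> nat \<Rightarrow> cmat) \<Rightarrow> (z2 \<Rightarrow> z2 \<Rightarrow> complex) \<Rightarrow> bool" where
  "proj_rep_lift n ut c \<longleftrightarrow>
     (\<forall>g. uhf_unitary n (ut g)) \<and>
     (\<forall>g h. cmod (c g h) = 1 \<and>
            uhf_eq n (uhf_mul n (ut g) (ut h)) (uhf_scale (c g h) (ut (z2add g h))))"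

text \<open>Image of the class of the cocycle c under H^2(Z^2,T) = T (commutator scalar of the
  standard generators a = (1,0), b = (0,1)).\<close>
definition ob_scalar :: "(z2 \<Rightarrow> z2 \<Rightarrow> complex) \<Rightarrow> complex" where
  "ob_scalar c = c (1, 0) (0, 1) * cnj (c (0, 1) (1, 0))"

end

theory Submission
  imports Defs "HOL-Analysis.Analysis" "Jordan_Normal_Form.Schur_Decomposition"
begin


definition vnorm :: "nat \<Rightarrow> (nat \<Rightarrow> complex) \<Rightarrow> real" where
  "vnorm N v = L2_set (\<lambda>i. cmod (v i)) {..<N}"

definition mv :: "nat \<Rightarrow> cmat \<Rightarrow> (nat \<Rightarrow> complex) \<Rightarrow> (nat \<Rightarrow> complex)" where
  "mv N a v = (\<lambda>i. \<Sum>j<N. a i j * v j)"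

lemma opnorm_alt: "opnorm N a = Sup {vnorm N (mv N a v) | v. vnorm N v \<le> 1}"
  unfolding opnorm_def vnorm_def mv_def L2_set_def by simp

lemma vnorm_nonneg: "vnorm N v \<ge> 0"
  unfolding vnorm_def by (simp add: L2_set_nonneg)

lemma comp_le_vnorm: "j < N \<Longrightarrow> cmod (v j) \<le> vnorm N v"
  unfolding vnorm_def by (rule member_le_L2_set) auto

lemma vnorm_le_sum: "vnorm N v \<le> (\<Sum>i<N. cmod (v i))"
  unfolding vnorm_def using L2_set_le_sum[of "{..<N}" "\<lambda>i. cmod (v i)"] by simp

lemma vnorm_scale: "vnorm N (\<lambda>i. c * v i) = cmod c * vnorm N v"
  unfolding vnorm_def using L2_set_right_distrib[of "cmod c" "\<lambda>i. cmod (v i)" "{..<N}"]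
  by (simp add: norm_mult)

lemma vnorm_eq0: "vnorm N v = 0 \<Longrightarrow> j < N \<Longrightarrow> v j = 0"
  using comp_le_vnorm[of j N v] by simp

lemma vnorm_add: "vnorm N (\<lambda>i. x i + y i) \<le> vnorm N x + vnorm N y"
proof -
  have "vnorm N (\<lambda>i. x i + y i) \<le> L2_set (\<lambda>i. cmod (x i) + cmod (y i)) {..<N}"
    unfolding vnorm_def by (rule L2_set_mono) (auto simp: norm_triangle_ineq)
  also have "\<dots> \<le> vnorm N x + vnorm N y"
    unfolding vnorm_def by (rule L2_set_triangle_ineq)
  finally show ?thesis .
qed

lemma vnorm_cong: "(\<And>i. i < N \<Longrightarrow> x i = y i) \<Longrightarrow> vnorm N x = vnorm N y"
  unfolding vnorm_def by (intro L2_set_cong) auto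

definition Kb :: "nat \<Rightarrow> cmat \<Rightarrow> real" where
  "Kb N a = (\<Sum>i<N. \<Sum>j<N. cmod (a i j))"

lemma mv_bound1: assumes "vnorm N v \<le> 1" shows "vnorm N (mv N a v) \<le> Kb N a"
proof -
  have "vnorm N (mv N a v) \<le> (\<Sum>i<N. cmod (mv N a v i))" by (rule vnorm_le_sum)
  also have "\<dots> \<le> Kb N a" unfolding Kb_def
  proof (rule sum_mono)
    fix i assume "i \<in> {..<N}"
    have "cmod (mv N a v i) \<le> (\<Sum>j<N. cmod (a i j * v j))"
      unfolding mv_def by (rule norm_sum)
    also have "\<dots> \<le> (\<Sum>j<N. cmod (a i j))"
    proof (rule sum_mono)
      fix j assume "j \<in> {..<N}"
      then have "cmod (v j) \<le> 1" using comp_le_vnorm[of j N v] assms by auto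
      then show "cmod (a i j * v j) \<le> cmod (a i j)"
        by (simp add: norm_mult mult_left_le)
    qed
    finally show "cmod (mv N a v i) \<le> (\<Sum>j<N. cmod (a i j))" .
  qed
  finally show ?thesis .
qed

lemma opnorm_bdd: "bdd_above {vnorm N (mv N a v) | v. vnorm N v \<le> 1}"
  unfolding bdd_above_def using mv_bound1 by blast

lemma opnorm_ne: "{vnorm N (mv N a v) | v. vnorm N v \<le> 1} \<noteq> {}"
proof -
  have "vnorm N (\<lambda>_. 0) \<le> 1" unfolding vnorm_def L2_set_def by simp
  then show ?thesis by blast
qed

lemma opnorm_ge1: "vnorm N v \<le> 1 \<Longrightarrow> vnorm N (mv N a v) \<le> opnorm N a"
  unfolding opnorm_alt by (rule cSup_upper[OF _ opnorm_bdd]) blast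

lemma opnorm_nonneg: "opnorm N a \<ge> 0"
proof -
  have "vnorm N (\<lambda>_. 0) \<le> 1" unfolding vnorm_def L2_set_def by simp
  then have "vnorm N (mv N a (\<lambda>_. 0)) \<le> opnorm N a" by (rule opnorm_ge1)
  then show ?thesis using vnorm_nonneg[of N "mv N a (\<lambda>_. 0)"] by linarith
qed

lemma mv_scale: "mv N a (\<lambda>i. c * v i) = (\<lambda>i. c * mv N a v i)"
  unfolding mv_def by (simp add: sum_distrib_left mult.left_commute)

lemma mv_cong: "(\<And>j. j < N \<Longrightarrow> v j = w j) \<Longrightarrow> mv N a v = mv N a w"
  unfolding mv_def by auto

lemma opnorm_bound: "vnorm N (mv N a v) \<le> opnorm N a * vnorm N v"
proof (cases "vnorm N v = 0")
  case True
  then have "mv N a v = mv N a (\<lambda>_. 0)" by (intro mv_cong) (auto dest: vnorm_eq0)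
  then have "mv N a v = (\<lambda>_. 0)" unfolding mv_def by simp
  then show ?thesis using True by (simp add: vnorm_def L2_set_def)
next
  case False
  define r where "r = vnorm N v"
  have r: "r > 0" using False vnorm_nonneg[of N v] unfolding r_def by auto
  define w where "w = (\<lambda>i. complex_of_real (1/r) * v i)"
  have "vnorm N w = 1" unfolding w_def vnorm_scale using r by (simp add: r_def norm_divide)
  then have "vnorm N (mv N a w) \<le> opnorm N a" by (intro opnorm_ge1) simp
  moreover have "vnorm N (mv N a w) = (1/r) * vnorm N (mv N a v)"
    unfolding w_def mv_scale vnorm_scale using r by (simp add: norm_divide)
  ultimately have "(1/r) * vnorm N (mv N a v) \<le> opnorm N a" by simp
  then show ?thesis using r by (simp add: r_def field_simps)
qed

lemma opnorm_least: assumes "c \<ge> 0" "\<And>v. vnorm N v \<le> 1 \<Longrightarrow> vnorm N (mv N a v) \<le> c"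
  shows "opnorm N a \<le> c"
  unfolding opnorm_alt by (rule cSup_least[OF opnorm_ne]) (use assms in blast)

lemma opnorm_least2: assumes "c \<ge> 0" "\<And>v. vnorm N (mv N a v) \<le> c * vnorm N v"
  shows "opnorm N a \<le> c"
proof (rule opnorm_least[OF assms(1)])
  fix v assume "vnorm N v \<le> 1"
  then show "vnorm N (mv N a v) \<le> c" using assms(2)[of v] assms(1)
    by (meson dual_order.trans mult_left_le)
qed

definition eqN :: "nat \<Rightarrow> cmat \<Rightarrow> cmat \<Rightarrow> bool" where
  "eqN N a b \<longleftrightarrow> (\<forall>i<N. \<forall>j<N. a i j = b i j)"

lemma opnorm_cong: assumes "eqN N a b" shows "opnorm N a = opnorm N b"
proof -
  have "\<And>v. vnorm N (mv N a v) = vnorm N (mv N b v)"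
    using assms unfolding eqN_def mv_def by (intro vnorm_cong) auto
  then show ?thesis unfolding opnorm_alt by simp
qed

lemma opnorm_zero: assumes "\<And>i j. i < N \<Longrightarrow> j < N \<Longrightarrow> a i j = 0" shows "opnorm N a = 0"
proof -
  have "opnorm N a \<le> 0"
  proof (rule opnorm_least)
    fix v
    have "vnorm N (mv N a v) = vnorm N (\<lambda>_. 0)"
      using assms unfolding mv_def by (intro vnorm_cong) auto
    then show "vnorm N (mv N a v) \<le> 0" by (simp add: vnorm_def L2_set_def)
  qed simp
  then show ?thesis using opnorm_nonneg[of N a] by linarith
qed

lemma opnorm_comb:
  assumes "\<And>i j. i < N \<Longrightarrow> j < N \<Longrightarrow> a i j = b i j + c i j"
  shows "opnorm N a \<le> opnorm N b + opnorm N c"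
proof (rule opnorm_least2)
  show "0 \<le> opnorm N b + opnorm N c" using opnorm_nonneg[of N b] opnorm_nonneg[of N c] by simp
  fix v
  have "vnorm N (mv N a v) = vnorm N (\<lambda>i. mv N b v i + mv N c v i)"
    using assms unfolding mv_def by (intro vnorm_cong) (auto simp: sum.distrib algebra_simps)
  also have "\<dots> \<le> vnorm N (mv N b v) + vnorm N (mv N c v)" by (rule vnorm_add)
  also have "\<dots> \<le> opnorm N b * vnorm N v + opnorm N c * vnorm N v"
    using opnorm_bound[of N b v] opnorm_bound[of N c v] by simp
  finally show "vnorm N (mv N a v) \<le> (opnorm N b + opnorm N c) * vnorm N v"
    by (simp add: algebra_simps)
qed

lemma opnorm_scale_le:
  assumes "\<And>i j. i < N \<Longrightarrow> j < N \<Longrightarrow> a i j = s * b i j"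
  shows "opnorm N a \<le> cmod s * opnorm N b"
proof (rule opnorm_least2)
  show "0 \<le> cmod s * opnorm N b" using opnorm_nonneg[of N b] by simp
  fix v
  have "vnorm N (mv N a v) = vnorm N (\<lambda>i. s * mv N b v i)"
    using assms unfolding mv_def by (intro vnorm_cong) (auto simp: sum_distrib_left algebra_simps)
  also have "\<dots> = cmod s * vnorm N (mv N b v)" by (rule vnorm_scale)
  also have "\<dots> \<le> cmod s * (opnorm N b * vnorm N v)"
    using opnorm_bound[of N b v] by (simp add: mult_left_mono)
  finally show "vnorm N (mv N a v) \<le> cmod s * opnorm N b * vnorm N v" by (simp add: algebra_simps)
qed

lemma mv_mmul: "mv N (mmul N a b) v = mv N a (mv N b v)"
proof
  fix i
  have "mv N (mmul N a b) v i = (\<Sum>j<N. \<Sum>l<N. a i l * b l j * v j)"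
    unfolding mv_def mmul_def by (simp add: sum_distrib_right)
  also have "\<dots> = (\<Sum>l<N. \<Sum>j<N. a i l * b l j * v j)" by (rule sum.swap)
  also have "\<dots> = mv N a (mv N b v) i"
    unfolding mv_def by (simp add: sum_distrib_left mult.assoc)
  finally show "mv N (mmul N a b) v i = mv N a (mv N b v) i" .
qed

lemma opnorm_mul: "opnorm N (mmul N a b) \<le> opnorm N a * opnorm N b"
proof (rule opnorm_least2)
  show "0 \<le> opnorm N a * opnorm N b" using opnorm_nonneg[of N b] opnorm_nonneg[of N a] by simp
  fix v
  have "vnorm N (mv N (mmul N a b) v) \<le> opnorm N a * vnorm N (mv N b v)"
    unfolding mv_mmul by (rule opnorm_bound)
  also have "\<dots> \<le> opnorm N a * (opnorm N b * vnorm N v)"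
    using opnorm_bound[of N b v] opnorm_nonneg[of N a] by (simp add: mult_left_mono)
  finally show "vnorm N (mv N (mmul N a b) v) \<le> opnorm N a * opnorm N b * vnorm N v"
    by (simp add: algebra_simps)
qed

lemma opnorm_mone: "opnorm N mone \<le> 1"
proof (rule opnorm_least2)
  fix v
  have "mv N mone v = (\<lambda>i. if i < N then v i else 0)"
  proof
    fix i
    have "(\<Sum>j<N. (if i = j then 1 else 0) * v j) = (\<Sum>j<N. if i = j then v j else 0)"
      by (rule sum.cong) auto
    then show "mv N mone v i = (if i < N then v i else 0)"
      unfolding mv_def mone_def by (simp add: sum.delta)
  qed
  then have "vnorm N (mv N mone v) = vnorm N v" by (intro vnorm_cong) auto
  then show "vnorm N (mv N mone v) \<le> 1 * vnorm N v" by simp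
qed simp

lemma entry_le_opnorm: assumes "i < N" shows "cmod (a i i) \<le> opnorm N a"
proof -
  define e where "e = (\<lambda>j. if j = i then (1::complex) else 0)"
  have "(\<Sum>j<N. (cmod (e j))\<^sup>2) = (\<Sum>j<N. if j = i then 1 else 0)"
    by (rule sum.cong) (auto simp: e_def)
  then have "vnorm N e = 1" unfolding vnorm_def L2_set_def using assms
    by (simp add: sum.delta')
  then have "vnorm N (mv N a e) \<le> opnorm N a" by (intro opnorm_ge1) simp
  moreover have "mv N a e i = a i i" unfolding mv_def e_def using assms
    by (simp add: if_distrib sum.delta cong: if_cong)
  ultimately show ?thesis using comp_le_vnorm[OF assms, of "mv N a e"] by simp
qed

definition mtr :: "nat \<Rightarrow> cmat \<Rightarrow> complex" where
  "mtr N a = (\<Sum>i<N. a i i)"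

lemma mtr_bound: "cmod (mtr N a) \<le> real N * opnorm N a"
proof -
  have "cmod (mtr N a) \<le> (\<Sum>i<N. cmod (a i i))" unfolding mtr_def by (rule norm_sum)
  also have "\<dots> \<le> (\<Sum>i<N. opnorm N a)" by (rule sum_mono) (simp add: entry_le_opnorm)
  finally show ?thesis by simp
qed

primrec cpow :: "nat \<Rightarrow> cmat \<Rightarrow> nat \<Rightarrow> cmat" where
  "cpow N a 0 = mone"
| "cpow N a (Suc m) = mmul N (cpow N a m) a"

lemma opnorm_cpow: "opnorm N (cpow N a m) \<le> opnorm N a ^ m"
proof (induction m)
  case 0 then show ?case using opnorm_mone by simp
next
  case (Suc m)
  have "opnorm N (cpow N a (Suc m)) \<le> opnorm N a * opnorm N (cpow N a m)"
    using opnorm_mul[of N "cpow N a m" a] by (simp add: mult.commute)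
  also have "\<dots> \<le> opnorm N a * opnorm N a ^ m"
    using Suc opnorm_nonneg[of N a] by (simp add: mult_left_mono)
  finally show ?case by simp
qed

lemma inner_identity:
  "complex_of_real (\<Sum>i<N. (cmod (mv N a v i))\<^sup>2) = (\<Sum>j<N. cnj (v j) * mv N (madj a) (mv N a v) j)"
proof -
  have "complex_of_real (\<Sum>i<N. (cmod (mv N a v i))\<^sup>2) = (\<Sum>i<N. complex_of_real ((cmod (mv N a v i))\<^sup>2))"
    by simp
  also have "\<dots> = (\<Sum>i<N. cnj (mv N a v i) * mv N a v i)"
  proof (rule sum.cong[OF refl])
    fix i
    show "complex_of_real ((cmod (mv N a v i))\<^sup>2) = cnj (mv N a v i) * mv N a v i"
      using complex_norm_square[of "mv N a v i"] by (simp add: mult.commute)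
  qed
  also have "\<dots> = (\<Sum>i<N. \<Sum>j<N. cnj (a i j) * cnj (v j) * mv N a v i)"
    unfolding mv_def[of N a v] by (simp add: sum_distrib_right)
  also have "\<dots> = (\<Sum>j<N. \<Sum>i<N. cnj (a i j) * cnj (v j) * mv N a v i)"
    by (rule sum.swap)
  also have "\<dots> = (\<Sum>j<N. cnj (v j) * mv N (madj a) (mv N a v) j)"
    by (simp add: mv_def madj_def sum_distrib_left mult.assoc mult.left_commute)
  finally show ?thesis .
qed

lemma cstar_ineq: "(opnorm N a)\<^sup>2 \<le> opnorm N (mmul N (madj a) a)"
proof -
  let ?c = "opnorm N (mmul N (madj a) a)"
  have c0: "?c \<ge> 0" by (rule opnorm_nonneg)
  have "opnorm N a \<le> sqrt ?c"
  proof (rule opnorm_least)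
    fix v assume v: "vnorm N v \<le> 1"
    have s0: "(\<Sum>i<N. (cmod (mv N a v i))\<^sup>2) \<ge> 0" by (rule sum_nonneg) simp
    have "(vnorm N (mv N a v))\<^sup>2 = (\<Sum>i<N. (cmod (mv N a v i))\<^sup>2)"
      unfolding vnorm_def L2_set_def using s0 by simp
    also have "\<dots> = cmod (complex_of_real (\<Sum>i<N. (cmod (mv N a v i))\<^sup>2))"
      unfolding norm_of_real using s0 by (rule abs_of_nonneg[symmetric])
    also have "\<dots> = cmod (\<Sum>j<N. cnj (v j) * mv N (madj a) (mv N a v) j)"
      by (simp only: inner_identity)
    also have "\<dots> \<le> (\<Sum>j<N. cmod (cnj (v j) * mv N (madj a) (mv N a v) j))"
      by (rule norm_sum)
    also have "\<dots> = (\<Sum>j<N. \<bar>cmod (v j)\<bar> * \<bar>cmod (mv N (madj a) (mv N a v) j)\<bar>)"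
      by (simp add: norm_mult)
    also have "\<dots> \<le> vnorm N v * vnorm N (mv N (madj a) (mv N a v))"
      unfolding vnorm_def by (rule L2_set_mult_ineq)
    also have "vnorm N (mv N (madj a) (mv N a v)) \<le> ?c * vnorm N v"
      using opnorm_bound[of N "mmul N (madj a) a" v] unfolding mv_mmul .
    then have "vnorm N v * vnorm N (mv N (madj a) (mv N a v)) \<le> 1 * (?c * 1)"
      using v vnorm_nonneg[of N v] vnorm_nonneg[of N "mv N (madj a) (mv N a v)"] c0
      by (intro mult_mono) (auto intro: order_trans mult_left_le)
    finally have "(vnorm N (mv N a v))\<^sup>2 \<le> ?c" by simp
    then show "vnorm N (mv N a v) \<le> sqrt ?c" by (simp add: real_le_rsqrt)
  qed (use c0 in simp)
  then have "(opnorm N a)\<^sup>2 \<le> (sqrt ?c)\<^sup>2"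
    using opnorm_nonneg[of N a] by (intro power_mono) auto
  then show ?thesis using c0 by simp
qed


lemma mmul_assoc: "mmul N (mmul N a b) c = mmul N a (mmul N b c)"
proof (intro ext)
  fix i j
  have "mmul N (mmul N a b) c i j = (\<Sum>l<N. \<Sum>m<N. a i m * b m l * c l j)"
    unfolding mmul_def by (simp add: sum_distrib_right)
  also have "\<dots> = (\<Sum>m<N. \<Sum>l<N. a i m * b m l * c l j)" by (rule sum.swap)
  also have "\<dots> = mmul N a (mmul N b c) i j"
    unfolding mmul_def by (simp add: sum_distrib_left mult.assoc)
  finally show "mmul N (mmul N a b) c i j = mmul N a (mmul N b c) i j" .
qed

lemma mmul_scale_left: "mmul N (mscale s a) b = mscale s (mmul N a b)"
  unfolding mmul_def mscale_def by (simp add: sum_distrib_left mult.assoc)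

lemma mmul_scale_right: "mmul N a (mscale s b) = mscale s (mmul N a b)"
  unfolding mmul_def mscale_def by (simp add: sum_distrib_left mult.left_commute)

lemma madj_madj[simp]: "madj (madj a) = a"
  unfolding madj_def by simp

lemma opnorm_diff_tri: "opnorm N (mdiff a c) \<le> opnorm N (mdiff a b) + opnorm N (mdiff b c)"
  by (rule opnorm_comb) (simp add: mdiff_def)

lemma opnorm_diff_comm: "opnorm N (mdiff a b) = opnorm N (mdiff b a)"
proof -
  have "opnorm N (mdiff a b) \<le> cmod (-1) * opnorm N (mdiff b a)"
    by (rule opnorm_scale_le) (simp add: mdiff_def)
  moreover have "opnorm N (mdiff b a) \<le> cmod (-1) * opnorm N (mdiff a b)"
    by (rule opnorm_scale_le) (simp add: mdiff_def)
  ultimately show ?thesis by simp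
qed

lemma opnorm_le_diff: "opnorm N a \<le> opnorm N b + opnorm N (mdiff a b)"
  by (rule opnorm_comb) (simp add: mdiff_def)

lemma opnorm_mul_diff:
  "opnorm N (mdiff (mmul N a1 a2) (mmul N b1 b2))
     \<le> opnorm N (mdiff a1 b1) * opnorm N a2 + opnorm N b1 * opnorm N (mdiff a2 b2)"
proof -
  have "opnorm N (mdiff (mmul N a1 a2) (mmul N b1 b2))
     \<le> opnorm N (mmul N (mdiff a1 b1) a2) + opnorm N (mmul N b1 (mdiff a2 b2))"
  proof (rule opnorm_comb)
    fix i j
    have "mdiff (mmul N a1 a2) (mmul N b1 b2) i j = (\<Sum>l<N. a1 i l * a2 l j - b1 i l * b2 l j)"
      by (simp add: mdiff_def mmul_def sum_subtractf)
    also have "\<dots> = (\<Sum>l<N. (a1 i l - b1 i l) * a2 l j + b1 i l * (a2 l j - b2 l j))"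
      by (rule sum.cong[OF refl]) (simp add: algebra_simps)
    also have "\<dots> = mmul N (mdiff a1 b1) a2 i j + mmul N b1 (mdiff a2 b2) i j"
      by (simp add: mdiff_def mmul_def sum.distrib)
    finally show "mdiff (mmul N a1 a2) (mmul N b1 b2) i j = mmul N (mdiff a1 b1) a2 i j + mmul N b1 (mdiff a2 b2) i j" .
  qed
  also have "\<dots> \<le> opnorm N (mdiff a1 b1) * opnorm N a2 + opnorm N b1 * opnorm N (mdiff a2 b2)"
    by (intro add_mono opnorm_mul)
  finally show ?thesis .
qed

lemma opnorm_adj: "opnorm N (madj a) \<le> opnorm N a"
proof -
  have "(opnorm N (madj a))\<^sup>2 \<le> opnorm N (mmul N (madj (madj a)) (madj a))" by (rule cstar_ineq)
  also have "\<dots> \<le> opnorm N a * opnorm N (madj a)" using opnorm_mul by simp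
  finally have *: "opnorm N (madj a) * opnorm N (madj a) \<le> opnorm N a * opnorm N (madj a)"
    by (simp add: power2_eq_square)
  show ?thesis
  proof (cases "opnorm N (madj a) = 0")
    case True then show ?thesis using opnorm_nonneg[of N a] by simp
  next
    case False
    then have "opnorm N (madj a) > 0" using opnorm_nonneg[of N "madj a"] by simp
    then show ?thesis using * by simp
  qed
qed

lemma madj_mdiff: "madj (mdiff a b) = mdiff (madj a) (madj b)"
  unfolding madj_def mdiff_def by simp

lemma opnorm_scale_unit: "cmod s = 1 \<Longrightarrow> opnorm N (mscale s a) \<le> opnorm N a"
  using opnorm_scale_le[of N "mscale s a" s a] by (simp add: mscale_def)

lemma eqN_refl[simp]: "eqN N a a" unfolding eqN_def by simp
lemma eqN_sym: "eqN N a b \<Longrightarrow> eqN N b a" unfolding eqN_def by simp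
lemma eqN_trans: "eqN N a b \<Longrightarrow> eqN N b c \<Longrightarrow> eqN N a c" unfolding eqN_def by simp

lemma mmul_cong: "eqN N a a' \<Longrightarrow> eqN N b b' \<Longrightarrow> eqN N (mmul N a b) (mmul N a' b')"
  unfolding eqN_def mmul_def by auto

lemma mmul_cong_eq: "eqN N a a' \<Longrightarrow> eqN N b b' \<Longrightarrow> i < N \<Longrightarrow> j < N \<Longrightarrow> mmul N a b i j = mmul N a' b' i j"
  using mmul_cong unfolding eqN_def by blast

lemma madj_cong: "eqN N a a' \<Longrightarrow> eqN N (madj a) (madj a')"
  unfolding eqN_def madj_def by auto

lemma mdiff_cong: "eqN N a a' \<Longrightarrow> eqN N b b' \<Longrightarrow> eqN N (mdiff a b) (mdiff a' b')"
  unfolding eqN_def mdiff_def by auto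

lemma mscale_cong: "eqN N a a' \<Longrightarrow> eqN N (mscale s a) (mscale s a')"
  unfolding eqN_def mscale_def by auto

lemma cpow_cong: "eqN N a a' \<Longrightarrow> eqN N (cpow N a p) (cpow N a' p)"
  by (induction p) (auto intro: mmul_cong)

lemma mtr_cong: "eqN N a a' \<Longrightarrow> mtr N a = mtr N a'"
  unfolding eqN_def mtr_def by auto

lemma mmul_mone_right: "eqN N (mmul N a mone) a"
proof -
  { fix i j assume j: "j < N"
    have "(\<Sum>l<N. a i l * (if l = j then 1 else 0)) = (\<Sum>l<N. if l = j then a i l else 0)"
      by (rule sum.cong) auto
    then have "mmul N a mone i j = a i j" unfolding mmul_def mone_def using j by (simp add: sum.delta') }
  then show ?thesis unfolding eqN_def by auto
qed

lemma mmul_mone_left: "eqN N (mmul N mone a) a"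
proof -
  { fix i j assume j: "i < N"
    have "(\<Sum>l<N. (if i = l then 1 else 0) * a l j) = (\<Sum>l<N. if i = l then a l j else 0)"
      by (rule sum.cong) auto
    then have "mmul N mone a i j = a i j" unfolding mmul_def mone_def using j by (simp add: sum.delta) }
  then show ?thesis unfolding eqN_def by auto
qed

lemma sum_group: "(\<Sum>s<a * m. f s) = (\<Sum>t<a. \<Sum>r<m. f (t * m + r)) " for f :: "nat \<Rightarrow> 'b::comm_monoid_add"
proof -
  have "(\<Sum>s<a * m. f s) = (\<Sum>t<a. sum f {t * m..<t * m + m})"
    by (rule sum.nat_group[symmetric])
  also have "\<dots> = (\<Sum>t<a. \<Sum>r<m. f (t * m + r))"
  proof (rule sum.cong[OF refl])
    fix t
    have "sum f {t * m..<t * m + m} = sum f ((\<lambda>r. t * m + r) ` {..<m})"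
      by (simp add: lessThan_atLeast0 image_add_atLeastLessThan add.commute)
    also have "\<dots> = (\<Sum>r<m. f (t * m + r))" by (subst sum.reindex) (auto simp: inj_on_def)
    finally show "sum f {t * m..<t * m + m} = (\<Sum>r<m. f (t * m + r))" .
  qed
  finally show ?thesis .
qed

lemma amp_entry: "amp n j k A i i' = (if i mod n^(k-j) = i' mod n^(k-j) then A (i div n^(k-j)) (i' div n^(k-j)) else 0)"
  unfolding amp_def Let_def by simp

lemma amp_madj: "amp n j k (madj A) = madj (amp n j k A)"
  unfolding amp_def madj_def Let_def by (auto intro!: ext)

lemma amp_mone: assumes "n \<ge> 1" shows "amp n j k mone = mone"
proof (intro ext)
  fix i i'
  have m: "n ^ (k - j) > 0" using assms by simp
  show "amp n j k mone i i' = mone i i'"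
    unfolding amp_entry mone_def using m
    by (auto, metis div_mult_mod_eq)
qed

lemma amp_mdiff: "amp n j k (mdiff A B) = mdiff (amp n j k A) (amp n j k B)"
  unfolding amp_def mdiff_def Let_def by (auto intro!: ext)

lemma amp_mscale: "amp n j k (mscale s A) = mscale s (amp n j k A)"
  unfolding amp_def mscale_def Let_def by (auto intro!: ext)

lemma pow_split: "j \<le> k \<Longrightarrow> (n::nat) ^ k = n ^ j * n ^ (k - j)"
  by (metis le_add_diff_inverse power_add)

lemma div_lt_pow: fixes n :: nat assumes "n \<ge> 1" "j \<le> k" "i < n ^ k" shows "i div n ^ (k - j) < n ^ j"
  using assms pow_split[of j k n] by (simp add: less_mult_imp_div_less)

lemma amp_cong: fixes n :: nat assumes "n \<ge> 1" "j \<le> k" "eqN (n^j) A A'" shows "eqN (n^k) (amp n j k A) (amp n j k A')"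
  using assms unfolding eqN_def amp_entry by (auto simp: div_lt_pow)

lemma amp_mmul: assumes n: "n \<ge> 1" and jk: "j \<le> k"
  shows "eqN (n^k) (mmul (n^k) (amp n j k A) (amp n j k B)) (amp n j k (mmul (n^j) A B))"
  unfolding eqN_def
proof (intro allI impI)
  fix i i' assume i: "i < n^k" and i': "i' < n^k"
  define m where "m = n ^ (k - j)"
  have m: "m > 0" using n by (simp add: m_def)
  have nk: "n ^ k = n ^ j * m" using pow_split[OF jk] by (simp add: m_def)
  have "mmul (n^k) (amp n j k A) (amp n j k B) i i'
      = (\<Sum>t<n^j. \<Sum>r<m. amp n j k A i (t * m + r) * amp n j k B (t * m + r) i')"
    unfolding mmul_def nk by (rule sum_group)
  also have "\<dots> = (\<Sum>t<n^j. if i mod m = i' mod m then A (i div m) t * B t (i' div m) else 0)"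
  proof (rule sum.cong[OF refl])
    fix t
    have "(\<Sum>r<m. amp n j k A i (t * m + r) * amp n j k B (t * m + r) i')
        = (\<Sum>r<m. if r = i mod m then (if i mod m = i' mod m then A (i div m) t * B t (i' div m) else 0) else 0)"
    proof (rule sum.cong[OF refl])
      fix r assume "r \<in> {..<m}"
      then have r: "r < m" by simp
      have d: "(t * m + r) div m = t" and md: "(t * m + r) mod m = r" using r m by auto
      show "amp n j k A i (t * m + r) * amp n j k B (t * m + r) i'
          = (if r = i mod m then (if i mod m = i' mod m then A (i div m) t * B t (i' div m) else 0) else 0)"
        unfolding amp_entry m_def[symmetric] d md by auto
    qed
    also have "\<dots> = (if i mod m = i' mod m then A (i div m) t * B t (i' div m) else 0)"
      using m by (simp add: sum.delta')
    finally show "(\<Sum>r<m. amp n j k A i (t * m + r) * amp n j k B (t * m + r) i')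
        = (if i mod m = i' mod m then A (i div m) t * B t (i' div m) else 0)" .
  qed
  also have "\<dots> = amp n j k (mmul (n^j) A B) i i'"
    unfolding amp_entry m_def[symmetric] mmul_def by simp
  finally show "mmul (n^k) (amp n j k A) (amp n j k B) i i' = amp n j k (mmul (n^j) A B) i i'" .
qed

lemma amp_cpow: assumes n: "n \<ge> 1" and jk: "j \<le> k"
  shows "eqN (n^k) (cpow (n^k) (amp n j k A) p) (amp n j k (cpow (n^j) A p))"
proof (induction p)
  case 0 then show ?case using amp_mone[OF n] by simp
next
  case (Suc p)
  have "eqN (n^k) (mmul (n^k) (cpow (n^k) (amp n j k A) p) (amp n j k A))
                  (mmul (n^k) (amp n j k (cpow (n^j) A p)) (amp n j k A))"
    by (rule mmul_cong[OF Suc eqN_refl])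
  from eqN_trans[OF this amp_mmul[OF n jk]] show ?case by simp
qed

lemma amp_mtr: assumes n: "n \<ge> 1" and jk: "j \<le> k"
  shows "mtr (n^k) (amp n j k A) = of_nat (n^(k-j)) * mtr (n^j) A"
proof -
  define m where "m = n ^ (k - j)"
  have m: "m > 0" using n by (simp add: m_def)
  have nk: "n ^ k = n ^ j * m" using pow_split[OF jk] by (simp add: m_def)
  have "mtr (n^k) (amp n j k A) = (\<Sum>t<n^j. \<Sum>r<m. amp n j k A (t * m + r) (t * m + r))"
    unfolding mtr_def nk by (rule sum_group)
  also have "\<dots> = (\<Sum>t<n^j. \<Sum>r<m. A t t)"
  proof (intro sum.cong refl)
    fix t r assume "r \<in> {..<m}"
    then have d: "(t * m + r) div m = t" using m by auto
    show "amp n j k A (t * m + r) (t * m + r) = A t t" unfolding amp_entry m_def[symmetric] d by simp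
  qed
  also have "\<dots> = of_nat m * mtr (n^j) A" unfolding mtr_def by (simp add: sum_distrib_left)
  finally show ?thesis by (simp add: m_def)
qed

lemma amp_comp: assumes n: "n \<ge> 1" and jj: "j \<le> j'" and jk: "j' \<le> k"
  shows "amp n j' k (amp n j j' A) = amp n j k A"
proof (intro ext)
  fix i i'
  define m1 where "m1 = n ^ (k - j')"
  define m2 where "m2 = n ^ (j' - j)"
  have e: "k - j = (k - j') + (j' - j)" using jj jk by simp
  have m12: "n ^ (k - j) = m1 * m2" unfolding m1_def m2_def power_add[symmetric] e[symmetric] ..
  have m1: "m1 > 0" and m2: "m2 > 0" using n by (auto simp: m1_def m2_def)
  have dd: "x div m1 div m2 = x div (m1 * m2)" for x by (simp add: div_mult2_eq)
  have mm: "x mod (m1 * m2) = m1 * (x div m1 mod m2) + x mod m1" for x by (rule mod_mult2_eq)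
  have cond: "(i mod m1 = i' mod m1 \<and> i div m1 mod m2 = i' div m1 mod m2) \<longleftrightarrow> i mod (m1 * m2) = i' mod (m1 * m2)"
  proof
    assume "i mod (m1 * m2) = i' mod (m1 * m2)"
    then have e: "m1 * (i div m1 mod m2) + i mod m1 = m1 * (i' div m1 mod m2) + i' mod m1" by (simp add: mm)
    have "i mod m1 = i' mod m1" using arg_cong[OF e, of "\<lambda>x. x mod m1"] by simp
    moreover have "i div m1 mod m2 = i' div m1 mod m2"
      using arg_cong[OF e, of "\<lambda>x. x div m1"] m1 by simp
    ultimately show "i mod m1 = i' mod m1 \<and> i div m1 mod m2 = i' div m1 mod m2" by simp
  qed (simp add: mm)
  show "amp n j' k (amp n j j' A) i i' = amp n j k A i i'"
    unfolding amp_entry m1_def[symmetric] m2_def[symmetric] m12 dd[symmetric] using cond by auto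
qed


definition mat_of :: "nat \<Rightarrow> cmat \<Rightarrow> complex mat" where
  "mat_of N a = mat N N (\<lambda>(i,j). a i j)"

lemma mat_of_carrier[simp]: "mat_of N a \<in> carrier_mat N N"
  unfolding mat_of_def by simp

lemma mat_of_dims[simp]: "dim_row (mat_of N a) = N" "dim_col (mat_of N a) = N"
  unfolding mat_of_def by simp_all

lemma mat_of_index[simp]: "i < N \<Longrightarrow> j < N \<Longrightarrow> mat_of N a $$ (i,j) = a i j"
  unfolding mat_of_def by simp

lemma mat_of_mmul: "mat_of N (mmul N a b) = mat_of N a * mat_of N b"
  by (rule eq_matI) (auto simp: mmul_def scalar_prod_def atLeast0LessThan)

lemma mat_of_mone: "mat_of N mone = 1\<^sub>m N"
  by (rule eq_matI) (auto simp: mone_def)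

lemma mat_of_cpow: "mat_of N (cpow N a p) = mat_of N a ^\<^sub>m p"
  by (induction p) (simp_all add: mat_of_mone mat_of_mmul)

definition jtr :: "complex mat \<Rightarrow> complex" where
  "jtr M = (\<Sum>i<dim_row M. M $$ (i,i))"

lemma mtr_jtr: "mtr N a = jtr (mat_of N a)"
  unfolding mtr_def jtr_def by simp

lemma jtr_comm: assumes "X \<in> carrier_mat n n" "Y \<in> carrier_mat n n"
  shows "jtr (X * Y) = jtr (Y * X)"
proof -
  have "jtr (X * Y) = (\<Sum>i<n. \<Sum>l<n. X $$ (i,l) * Y $$ (l,i))"
    unfolding jtr_def using assms by (simp add: scalar_prod_def atLeast0LessThan)
  also have "\<dots> = (\<Sum>l<n. \<Sum>i<n. Y $$ (l,i) * X $$ (i,l))"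
    by (subst sum.swap) (simp add: mult.commute)
  also have "\<dots> = jtr (Y * X)"
    unfolding jtr_def using assms by (simp add: scalar_prod_def atLeast0LessThan)
  finally show ?thesis .
qed

lemma upper_mult:
  assumes X: "X \<in> carrier_mat n n" and Y: "Y \<in> carrier_mat n n"
    and uX: "upper_triangular X" and uY: "upper_triangular Y"
  shows "upper_triangular (X * Y) \<and> (\<forall>i<n. (X * Y) $$ (i,i) = X $$ (i,i) * Y $$ (i,i))"
proof
  show "upper_triangular (X * Y)"
  proof (rule upper_triangularI)
    fix i j assume ji: "j < i" and i: "i < dim_row (X * Y)"
    then have i': "i < n" using X by simp
    have "(X * Y) $$ (i, j) = (\<Sum>l\<in>{0..<n}. X $$ (i,l) * Y $$ (l,j))"
      using X Y i' ji by (simp add: scalar_prod_def)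
    also have "\<dots> = 0"
    proof (rule sum.neutral, intro ballI)
      fix l assume l: "l \<in> {0..<n}"
      show "X $$ (i,l) * Y $$ (l,j) = 0"
      proof (cases "l < i")
        case True then show ?thesis using uX X i' by (auto dest: upper_triangularD)
      next
        case False then have "j < l" using ji by simp
        then show ?thesis using uY Y l by (auto dest: upper_triangularD)
      qed
    qed
    finally show "(X * Y) $$ (i, j) = 0" .
  qed
  show "\<forall>i<n. (X * Y) $$ (i,i) = X $$ (i,i) * Y $$ (i,i)"
  proof (intro allI impI)
    fix i assume i: "i < n"
    have "(X * Y) $$ (i, i) = (\<Sum>l\<in>{0..<n}. X $$ (i,l) * Y $$ (l,i))"
      using X Y i by (simp add: scalar_prod_def)
    also have "\<dots> = (\<Sum>l\<in>{0..<n}. if l = i then X $$ (i,i) * Y $$ (i,i) else 0)"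
    proof (rule sum.cong[OF refl])
      fix l assume l: "l \<in> {0..<n}"
      show "X $$ (i,l) * Y $$ (l,i) = (if l = i then X $$ (i,i) * Y $$ (i,i) else 0)"
      proof (cases "l < i")
        case True then show ?thesis using uX X i by (auto dest: upper_triangularD)
      next
        case False
        show ?thesis
        proof (cases "l = i")
          case False
          with \<open>\<not> l < i\<close> have "i < l" by simp
          then show ?thesis using uY Y l by (auto dest: upper_triangularD)
        qed simp
      qed
    qed
    also have "\<dots> = X $$ (i,i) * Y $$ (i,i)" using i by simp
    finally show "(X * Y) $$ (i, i) = X $$ (i,i) * Y $$ (i,i)" .
  qed
qed

lemma upper_pow:
  assumes B: "B \<in> carrier_mat n n" and uB: "upper_triangular B"
  shows "B ^\<^sub>m p \<in> carrier_mat n n \<and> upper_triangular (B ^\<^sub>m p) \<and> (\<forall>i<n. (B ^\<^sub>m p) $$ (i,i) = (B $$ (i,i)) ^ p)"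
proof (induction p)
  case 0 then show ?case using B by auto
next
  case (Suc p)
  then have c: "B ^\<^sub>m p \<in> carrier_mat n n" and u: "upper_triangular (B ^\<^sub>m p)"
    and d: "\<forall>i<n. (B ^\<^sub>m p) $$ (i,i) = (B $$ (i,i)) ^ p" by auto
  have "B ^\<^sub>m Suc p = B ^\<^sub>m p * B" by simp
  with upper_mult[OF c B u uB] d c B show ?case by (auto simp: power_Suc2 simp del: power_Suc)
qed

lemma eigen_bound:
  assumes "eigenvalue (mat_of N D) e" shows "cmod e \<le> opnorm N D"
proof -
  obtain v where ev: "eigenvector (mat_of N D) v e" using assms unfolding eigenvalue_def by blast
  then have vc: "v \<in> carrier_vec N" and vnz: "v \<noteq> 0\<^sub>v N" and eq: "mat_of N D *\<^sub>v v = e \<cdot>\<^sub>v v"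
    unfolding eigenvector_def by auto
  define w where "w = (\<lambda>j. if j < N then v $ j else 0)"
  have mvw: "\<And>i. i < N \<Longrightarrow> mv N D w i = e * w i"
  proof -
    fix i assume i: "i < N"
    have "mv N D w i = (mat_of N D *\<^sub>v v) $ i"
      using i vc unfolding mv_def w_def by (simp add: scalar_prod_def atLeast0LessThan)
    also have "\<dots> = e * w i" using eq i vc by (simp add: w_def)
    finally show "mv N D w i = e * w i" .
  qed
  have "vnorm N w \<noteq> 0"
  proof
    assume "vnorm N w = 0"
    then have "\<And>j. j < N \<Longrightarrow> v $ j = 0" using vnorm_eq0[of N w] by (auto simp: w_def)
    then have "v = 0\<^sub>v N" using vc by (intro eq_vecI) auto
    with vnz show False by simp
  qed
  then have pos: "vnorm N w > 0" using vnorm_nonneg[of N w] by simp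
  have "vnorm N (mv N D w) = cmod e * vnorm N w"
    using mvw vnorm_scale[of N e w] vnorm_cong[of N "mv N D w" "\<lambda>i. e * w i"] by simp
  with opnorm_bound[of N D w] have "cmod e * vnorm N w \<le> opnorm N D * vnorm N w" by simp
  with pos show ?thesis by simp
qed

lemma ln_series_shift: assumes "cmod e < 1"
  shows "(\<lambda>p. - (e ^ Suc p) / of_nat (Suc p)) sums Ln (1 - e)"
proof -
  have "(\<lambda>n. (-1)^Suc n / of_nat n * (-e)^n) sums ln (1 + (-e))"
    by (rule Ln_series) (use assms in simp)
  then have "(\<lambda>n. - (e ^ n) / of_nat n) sums Ln (1 - e)"
    by (simp add: power_minus' field_simps)
  then show ?thesis using sums_Suc_iff[of "\<lambda>n. - (e ^ n) / of_nat n"] by simp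
qed

lemma logdet:
  assumes D: "opnorm N D < 1"
  shows "\<exists>L. (\<lambda>p. - mtr N (cpow N D (Suc p)) / of_nat (Suc p)) sums L \<and>
             exp L = det (mat_of N (mdiff mone D))"
proof -
  define Dm where "Dm = mat_of N D"
  have Dc: "Dm \<in> carrier_mat N N" unfolding Dm_def by simp
  obtain es where cp: "char_poly Dm = (\<Prod>a\<leftarrow>es. [:- a, 1:])" and les: "length es = N"
    using char_poly_factorized[OF Dc] by blast
  obtain B P Q where sd: "schur_decomposition Dm es = (B,P,Q)" by (cases "schur_decomposition Dm es") auto
  from schur_decomposition[OF Dc cp sd] have sim: "similar_mat_wit Dm B P Q"
    and uB: "upper_triangular B" and dB: "diag_mat B = es" by auto
  from sim Dc have Bc: "B \<in> carrier_mat N N" and Pc: "P \<in> carrier_mat N N" and Qc: "Q \<in> carrier_mat N N"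
    and QP: "Q * P = 1\<^sub>m N"
    unfolding similar_mat_wit_def Let_def by auto
  define d where "d = (\<lambda>i. B $$ (i,i))"
  have es: "es = map d [0..<N]" using dB Bc unfolding diag_mat_def d_def by auto
  have small: "\<And>i. i < N \<Longrightarrow> cmod (d i) < 1"
  proof -
    fix i assume i: "i < N"
    have "d i \<in> set es" using es i by auto
    then have "poly (char_poly Dm) (d i) = 0"
      unfolding cp poly_prod_list by (auto simp: prod_list_zero_iff)
    then have "eigenvalue Dm (d i)" using eigenvalue_root_char_poly[OF Dc] by simp
    then have "cmod (d i) \<le> opnorm N D" unfolding Dm_def by (rule eigen_bound)
    with D show "cmod (d i) < 1" by simp
  qed
  have tr: "mtr N (cpow N D p) = (\<Sum>i<N. d i ^ p)" for p
  proof -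
    have Bp: "B ^\<^sub>m p \<in> carrier_mat N N" using upper_pow[OF Bc uB, of p] by simp
    have "mtr N (cpow N D p) = jtr (Dm ^\<^sub>m p)" unfolding mtr_jtr mat_of_cpow Dm_def ..
    also have "Dm ^\<^sub>m p = P * B ^\<^sub>m p * Q" by (rule similar_mat_wit_pow_id[OF sim])
    also have "jtr (P * B ^\<^sub>m p * Q) = jtr (Q * (P * B ^\<^sub>m p))"
      using Pc Qc upper_pow[OF Bc uB, of p] by (intro jtr_comm[of _ N]) auto
    also have "Q * (P * B ^\<^sub>m p) = (Q * P) * B ^\<^sub>m p"
      using Pc Qc Bp by (metis assoc_mult_mat)
    also have "\<dots> = B ^\<^sub>m p" unfolding QP using Bp by (rule left_mult_one_mat)
    also have "jtr (B ^\<^sub>m p) = (\<Sum>i<N. d i ^ p)"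
      unfolding jtr_def d_def using upper_pow[OF Bc uB, of p] Bp Bc by simp
    finally show ?thesis .
  qed
  have "(\<lambda>p. \<Sum>i<N. - (d i ^ Suc p) / of_nat (Suc p)) sums (\<Sum>i<N. Ln (1 - d i))"
    by (rule sums_sum, rule ln_series_shift, simp add: small)
  moreover have "(\<lambda>p. \<Sum>i<N. - (d i ^ Suc p) / of_nat (Suc p)) = (\<lambda>p. - mtr N (cpow N D (Suc p)) / of_nat (Suc p))"
  proof
    fix p
    show "(\<Sum>i<N. - (d i ^ Suc p) / of_nat (Suc p)) = - mtr N (cpow N D (Suc p)) / of_nat (Suc p)"
      unfolding tr[of "Suc p"] by (simp add: sum_divide_distrib sum_negf)
  qed
  ultimately have S: "(\<lambda>p. - mtr N (cpow N D (Suc p)) / of_nat (Suc p)) sums (\<Sum>i<N. Ln (1 - d i))" by simp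
  have "exp (\<Sum>i<N. Ln (1 - d i)) = (\<Prod>i<N. exp (Ln (1 - d i)))" by (simp add: exp_sum)
  also have "\<dots> = (\<Prod>i<N. 1 - d i)"
  proof (rule prod.cong[OF refl])
    fix i assume "i \<in> {..<N}"
    then have "d i \<noteq> 1" using small[of i] by auto
    then show "exp (Ln (1 - d i)) = 1 - d i" by simp
  qed
  also have "\<dots> = poly (char_poly Dm) 1"
  proof -
    have "poly (char_poly Dm) 1 = prod_list (map (\<lambda>i. 1 - d i) [0..<N])"
      unfolding cp poly_prod_list es by (simp add: o_def)
    also have "\<dots> = (\<Prod>i<N. 1 - d i)"
      by (induction N) auto
    finally show ?thesis by simp
  qed
  also have "\<dots> = det (mat_of N (mdiff mone D))"
  proof -
    have "- char_matrix Dm 1 = mat_of N (mdiff mone D)"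
      unfolding char_matrix_def Dm_def
      by (rule eq_matI) (auto simp: mdiff_def mone_def)
    then show ?thesis using char_poly_matrix[OF Dc, of 1] by simp
  qed
  finally show ?thesis using S by blast
qed

lemma det_madj: "det (mat_of N (madj a)) = cnj (det (mat_of N a))"
proof -
  have "det (mat_of N (madj a)) = det (transpose_mat (mat_of N (madj a)))"
    by (rule det_transpose[symmetric, of _ N]) simp
  also have "\<dots> = (\<Sum>p\<in>{p. p permutes {0..<N}}. signof p * (\<Prod>i=0..<N. cnj (a i (p i))))"
    by (subst det_def'[of _ N]) (auto simp: madj_def intro!: sum.cong prod.cong)
  also have "\<dots> = cnj (det (mat_of N a))"
    by (subst det_def'[of _ N]) (auto simp: cnj_sum cnj_prod intro!: sum.cong prod.cong
        simp: sign_def)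
  finally show ?thesis .
qed


definition Wf :: "nat \<Rightarrow> cmat \<Rightarrow> cmat \<Rightarrow> cmat" where
  "Wf N A B = mmul N (mmul N (mmul N A B) (madj A)) (madj B)"

definition Dev :: "nat \<Rightarrow> complex \<Rightarrow> cmat \<Rightarrow> cmat \<Rightarrow> cmat" where
  "Dev N w A B = mdiff mone (mscale (cnj w) (Wf N A B))"

definition LT :: "nat \<Rightarrow> cmat \<Rightarrow> complex" where
  "LT N D = suminf (\<lambda>p. - mtr N (cpow N D (Suc p)) / of_nat (Suc p))"

lemma LT_exp: assumes "opnorm N D < 1"
  shows "summable (\<lambda>p. - mtr N (cpow N D (Suc p)) / of_nat (Suc p))"
    and "exp (LT N D) = det (mat_of N (mdiff mone D))"
proof -
  obtain L where S: "(\<lambda>p. - mtr N (cpow N D (Suc p)) / of_nat (Suc p)) sums L"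
    and E: "exp L = det (mat_of N (mdiff mone D))" using logdet[OF assms] by blast
  show "summable (\<lambda>p. - mtr N (cpow N D (Suc p)) / of_nat (Suc p))" using S by (rule sums_summable)
  show "exp (LT N D) = det (mat_of N (mdiff mone D))" using S E unfolding LT_def by (simp add: sums_iff)
qed

lemma div_suc_le: "cmod (- x / of_nat (Suc p)) \<le> cmod (x::complex)"
proof -
  have "cmod (- x / of_nat (Suc p)) = cmod x / cmod (of_nat (Suc p) :: complex)"
    by (simp only: norm_divide norm_minus_cancel)
  also have "\<dots> = cmod x / real (Suc p)" by (simp only: norm_of_nat)
  also have "\<dots> \<le> cmod x / 1" by (intro divide_left_mono) auto
  finally show ?thesis by simp
qed

lemma nz_suc: "(1::complex) + of_nat p \<noteq> 0"
proof -
  have "(1::complex) + of_nat p = of_nat (Suc p)" by simp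
  also have "\<dots> \<noteq> 0" by (metis of_nat_eq_0_iff nat.distinct(1))
  finally show ?thesis .
qed

lemma term_bound: assumes "opnorm N D \<le> q"
  shows "cmod (- mtr N (cpow N D (Suc p)) / of_nat (Suc p)) \<le> real N * q ^ Suc p"
proof -
  have "cmod (- mtr N (cpow N D (Suc p)) / of_nat (Suc p)) \<le> cmod (mtr N (cpow N D (Suc p)))"
    by (rule div_suc_le)
  also have "\<dots> \<le> real N * opnorm N (cpow N D (Suc p))" by (rule mtr_bound)
  also have "\<dots> \<le> real N * opnorm N D ^ Suc p"
    by (intro mult_left_mono opnorm_cpow) simp
  also have "\<dots> \<le> real N * q ^ Suc p"
    by (intro mult_left_mono power_mono assms opnorm_nonneg) simp
  finally show ?thesis .
qed

lemma LT_bound: assumes "opnorm N D \<le> q" "q \<le> 1/2"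
  shows "cmod (LT N D) \<le> 2 * real N * q"
proof -
  have q0: "q \<ge> 0" using opnorm_nonneg[of N D] assms by simp
  have sg: "summable (\<lambda>p. real N * q ^ Suc p)" using assms q0
    by (intro summable_mult summable_mult2) (simp add: summable_geometric)
  have "cmod (LT N D) \<le> (\<Sum>p. real N * q ^ Suc p)" unfolding LT_def
    by (rule norm_suminf_le[OF term_bound[OF assms(1)] sg])
  also have "\<dots> = real N * (q / (1 - q))"
  proof -
    have G: "(\<lambda>p. q ^ Suc p) sums (q * (1 / (1 - q)))"
      using sums_mult[OF geometric_sums[of q], of q] assms q0 by simp
    then have "(\<lambda>p. real N * q ^ Suc p) sums (real N * (q / (1 - q)))"
      using sums_mult[OF G, of "real N"] by simp
    then show ?thesis by (simp add: sums_iff)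
  qed
  also have "\<dots> \<le> real N * (2 * q)"
  proof (intro mult_left_mono)
    have h: "0 \<le> q * (1 - 2 * q)" using assms q0 by (intro mult_nonneg_nonneg) auto
    have "q \<le> 2 * q * (1 - q)" using h by (simp add: algebra_simps)
    then show "q / (1 - q) \<le> 2 * q" using assms by (simp add: divide_le_eq)
  qed simp
  finally show ?thesis by simp
qed

lemma mdiff_mone_Dev: "mdiff mone (Dev N w A B) = mscale (cnj w) (Wf N A B)"
  unfolding Dev_def mdiff_def by simp

lemma mat_of_mscale: "mat_of N (mscale s a) = s \<cdot>\<^sub>m mat_of N a"
  by (rule eq_matI) (auto simp: mscale_def)

lemma det_phase: "\<exists>r\<ge>0. det (mat_of N (mdiff mone (Dev N w A B))) = cnj w ^ N * of_real r"
proof -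
  define dA where "dA = det (mat_of N A)"
  define dB where "dB = det (mat_of N B)"
  have c1: "mat_of N A * mat_of N B \<in> carrier_mat N N" by (rule mult_carrier_mat[of _ N N]) simp_all
  have c2: "mat_of N A * mat_of N B * mat_of N (madj A) \<in> carrier_mat N N"
    by (rule mult_carrier_mat[OF c1, of _ N]) simp
  have "det (mat_of N A * mat_of N B * mat_of N (madj A) * mat_of N (madj B))
      = det (mat_of N A * mat_of N B * mat_of N (madj A)) * det (mat_of N (madj B))"
    by (rule det_mult[OF c2]) simp
  also have "det (mat_of N A * mat_of N B * mat_of N (madj A)) = det (mat_of N A * mat_of N B) * det (mat_of N (madj A))"
    by (rule det_mult[OF c1]) simp
  also have "det (mat_of N A * mat_of N B) = dA * dB" unfolding dA_def dB_def by (rule det_mult[of _ N]) simp_all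
  finally have dd: "det (mat_of N A * mat_of N B * mat_of N (madj A) * mat_of N (madj B)) = dA * dB * cnj dA * cnj dB"
    by (simp add: det_madj dA_def dB_def)
  have "det (mat_of N (mdiff mone (Dev N w A B))) = cnj w ^ N * (dA * dB * cnj dA * cnj dB)"
    unfolding mdiff_mone_Dev mat_of_mscale Wf_def mat_of_mmul det_smult dd by simp
  also have "dA * dB * cnj dA * cnj dB = (dA * cnj dA) * (dB * cnj dB)" by (simp add: algebra_simps)
  also have "\<dots> = of_real ((cmod dA)\<^sup>2 * (cmod dB)\<^sup>2)"
    by (simp only: of_real_mult complex_norm_square)
  finally show ?thesis by (intro exI[of _ "(cmod dA)\<^sup>2 * (cmod dB)\<^sup>2"]) simp
qed

definition contm :: "(real \<Rightarrow> cmat) \<Rightarrow> bool" where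
  "contm F \<longleftrightarrow> (\<forall>i j. continuous_on UNIV (\<lambda>t. F t i j))"

lemma contm_mmul: "contm F \<Longrightarrow> contm G \<Longrightarrow> contm (\<lambda>t. mmul N (F t) (G t))"
  unfolding contm_def mmul_def by (auto intro!: continuous_intros)

lemma contm_madj: "contm F \<Longrightarrow> contm (\<lambda>t. madj (F t))"
  unfolding contm_def madj_def by (auto intro!: continuous_intros)

lemma contm_mdiff: "contm F \<Longrightarrow> contm G \<Longrightarrow> contm (\<lambda>t. mdiff (F t) (G t))"
  unfolding contm_def mdiff_def by (auto intro!: continuous_intros)

lemma contm_mscale: "contm F \<Longrightarrow> contm (\<lambda>t. mscale s (F t))"
  unfolding contm_def mscale_def by (auto intro!: continuous_intros)

lemma contm_const: "contm (\<lambda>t. a)"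
  unfolding contm_def by (auto intro!: continuous_intros)

lemma contm_cpow: "contm F \<Longrightarrow> contm (\<lambda>t. cpow N (F t) p)"
  by (induction p) (auto intro: contm_mmul contm_const)

lemma cont_mtr: "contm F \<Longrightarrow> continuous_on UNIV (\<lambda>t. mtr N (F t))"
  unfolding contm_def mtr_def by (auto intro!: continuous_intros)

definition lpath :: "cmat \<Rightarrow> cmat \<Rightarrow> real \<Rightarrow> cmat" where
  "lpath P Q t = (\<lambda>i j. (1 - of_real t) * P i j + of_real t * Q i j)"

lemma contm_lpath: "contm (lpath P Q)"
  unfolding contm_def lpath_def by (auto intro!: continuous_intros)

lemma lpath_0[simp]: "lpath P Q 0 = P" and lpath_1[simp]: "lpath P Q 1 = Q"
  unfolding lpath_def by auto

lemma cont_LT: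
  assumes c: "contm Y" and b: "\<And>t. t \<in> {0..1} \<Longrightarrow> opnorm N (Y t) \<le> q" and q: "q < 1"
  shows "continuous_on {0..1} (\<lambda>t. LT N (Y t))"
proof -
  have q0: "q \<ge> 0" using b[of 0] opnorm_nonneg[of N "Y 0"] by simp
  have ul: "uniform_limit {0..1} (\<lambda>n t. \<Sum>p<n. - mtr N (cpow N (Y t) (Suc p)) / of_nat (Suc p))
              (\<lambda>t. suminf (\<lambda>p. - mtr N (cpow N (Y t) (Suc p)) / of_nat (Suc p))) sequentially"
  proof (rule Weierstrass_m_test)
    show "\<And>n t. t \<in> {0..1} \<Longrightarrow> norm (- mtr N (cpow N (Y t) (Suc n)) / of_nat (Suc n)) \<le> real N * q ^ Suc n"
      by (rule term_bound) (rule b)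
    show "summable (\<lambda>n. real N * q ^ Suc n)" using q q0
      by (intro summable_mult summable_mult2) (simp add: summable_geometric)
  qed
  have "continuous_on {0..1} (\<lambda>t. suminf (\<lambda>p. - mtr N (cpow N (Y t) (Suc p)) / of_nat (Suc p)))"
  proof (rule uniform_limit_theorem[OF _ ul])
    show "\<forall>\<^sub>F n in sequentially. continuous_on {0..1} (\<lambda>t. \<Sum>p<n. - mtr N (cpow N (Y t) (Suc p)) / of_nat (Suc p))"
    proof (intro always_eventually allI)
      fix n
      have "continuous_on UNIV (\<lambda>t. \<Sum>p<n. - mtr N (cpow N (Y t) (Suc p)) / of_nat (Suc p))"
        by (intro continuous_intros cont_mtr contm_cpow c) (simp add: nz_suc)
      then show "continuous_on {0..1} (\<lambda>t. \<Sum>p<n. - mtr N (cpow N (Y t) (Suc p)) / of_nat (Suc p))"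
        by (rule continuous_on_subset) simp
    qed
  qed simp
  then show ?thesis unfolding LT_def .
qed

lemma exp_split: "exp z = of_real (exp (Re z)) * exp (\<i> * of_real (Im z))"
proof -
  have "z = of_real (Re z) + \<i> * of_real (Im z)" by (simp add: complex_eq_iff)
  then have "exp z = exp (of_real (Re z) + \<i> * of_real (Im z))" by simp
  also have "\<dots> = of_real (exp (Re z)) * exp (\<i> * of_real (Im z))" by (simp add: exp_add exp_of_real)
  finally show ?thesis .
qed

lemma phase_from_exp:
  assumes "exp z = c * of_real r" "r \<ge> 0" "cmod c = 1"
  shows "exp (\<i> * of_real (Im z)) = c"
proof -
  have "cmod (exp z) = r" using assms by (simp add: norm_mult)
  then have r: "r = exp (Re z)" by simp
  have "of_real (exp (Re z)) * exp (\<i> * of_real (Im z)) = c * of_real (exp (Re z))"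
    using assms(1) exp_split[of z] r by simp
  then show ?thesis by (simp add: mult.commute)
qed

lemma path_const:
  assumes c: "contm Y" and b: "\<And>t. t \<in> {0..1} \<Longrightarrow> opnorm N (Y t) \<le> q" and q: "q < 1"
    and ph: "\<And>t. t \<in> {0..1} \<Longrightarrow> \<exists>r\<ge>0. det (mat_of N (mdiff mone (Y t))) = cc * of_real r"
    and cc: "cmod cc = 1"
  shows "Im (LT N (Y 1)) = Im (LT N (Y 0))"
proof -
  define g where "g = (\<lambda>t. Im (LT N (Y t)))"
  have gc: "continuous_on {0..1} g" unfolding g_def
    by (intro continuous_intros cont_LT[OF c b q]) auto
  have eph: "exp (\<i> * of_real (g t)) = cc" if t: "t \<in> {0..1}" for t
  proof -
    have lt1: "opnorm N (Y t) < 1" using b[OF t] q by simp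
    obtain r where r: "r \<ge> 0" "det (mat_of N (mdiff mone (Y t))) = cc * of_real r" using ph[OF t] by blast
    have "exp (LT N (Y t)) = cc * of_real r" using LT_exp(2)[OF lt1] r by simp
    then show ?thesis unfolding g_def using phase_from_exp r(1) cc by blast
  qed
  define h where "h = (\<lambda>t. (g t - g 0) / (2 * pi))"
  have hint: "h t \<in> \<int>" if t: "t \<in> {0..1}" for t
  proof -
    have "exp (\<i> * of_real (g t)) = exp (\<i> * of_real (g 0))" using eph[OF t] eph[of 0] by simp
    then obtain m :: int where m: "\<i> * of_real (g t) = \<i> * of_real (g 0) + of_int (2 * m) * pi * \<i>"
      unfolding exp_eq by blast
    then have "g t = g 0 + 2 * m * pi"
      by (simp add: complex_eq_iff)
    then have "h t = of_int m" unfolding h_def by (simp add: field_simps)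
    then show ?thesis by simp
  qed
  have hc: "continuous_on {0..1} h" unfolding h_def by (intro continuous_intros gc) auto
  have "h constant_on {0..1}"
  proof (rule continuous_discrete_range_constant[OF _ hc])
    show "connected {0..1::real}" by simp
    fix x assume x: "x \<in> {0..1::real}"
    show "\<exists>e>0. \<forall>y. y \<in> {0..1} \<and> h y \<noteq> h x \<longrightarrow> e \<le> norm (h y - h x)"
    proof (intro exI[of _ 1] conjI allI impI)
      fix y assume y: "y \<in> {0..1} \<and> h y \<noteq> h x"
      then obtain a b where "h y = of_int a" "h x = of_int b" using hint x by (metis Ints_cases)
      with y show "1 \<le> norm (h y - h x)" by auto
    qed simp
  qed
  then obtain y where "\<forall>t\<in>{0..1}. h t = y" unfolding constant_on_def by blast
  then have "h 1 = h 0" by auto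
  then show ?thesis unfolding h_def g_def by simp
qed


lemma unit_cnj: "cmod (s::complex) = 1 \<Longrightarrow> cnj s * s = 1"
  by (metis complex_norm_square mult.commute of_real_1 one_power2)

lemma le_mult_bound:
  fixes x b c b' c' :: real
  assumes "x \<le> b * c" "b \<le> b'" "c \<le> c'" "0 \<le> b'" "0 \<le> c"
  shows "x \<le> b' * c'"
  using assms by (meson order_trans mult_mono)

lemma opnorm_zero_diff[simp]: "opnorm N (mdiff a a) = 0"
  by (rule opnorm_zero) (simp add: mdiff_def)

lemma opnorm_mul_diff_r:
  "opnorm N (mdiff (mmul N a1 c) (mmul N b1 c)) \<le> opnorm N (mdiff a1 b1) * opnorm N c"
  using opnorm_mul_diff[of N a1 c b1 c] by simp

lemma opnorm_mul_diff_l: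
  "opnorm N (mdiff (mmul N c a2) (mmul N c b2)) \<le> opnorm N c * opnorm N (mdiff a2 b2)"
  using opnorm_mul_diff[of N c a2 c b2] by simp

lemma opnorm_scale_diff: "cmod s = 1 \<Longrightarrow> opnorm N (mdiff (mscale s a) (mscale s b)) \<le> opnorm N (mdiff a b)"
  using opnorm_scale_le[of N "mdiff (mscale s a) (mscale s b)" s "mdiff a b"]
  by (simp add: mdiff_def mscale_def algebra_simps)

lemma norm_from_unitary:
  assumes "opnorm N (mdiff (mmul N (madj x) x) mone) \<le> 1"
  shows "opnorm N x \<le> 2"
proof -
  have "(opnorm N x)\<^sup>2 \<le> opnorm N (mmul N (madj x) x)" by (rule cstar_ineq)
  also have "\<dots> \<le> opnorm N mone + opnorm N (mdiff (mmul N (madj x) x) mone)" by (rule opnorm_le_diff)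
  also have "\<dots> \<le> 2" using opnorm_mone[of N] assms by simp
  finally have "(opnorm N x)\<^sup>2 \<le> 2" .
  then have "(opnorm N x)\<^sup>2 \<le> 2\<^sup>2" by simp
  then show ?thesis by (rule power2_le_imp_le) simp
qed

lemma comm_est:
  assumes a: "cmod a = 1" and b: "cmod b = 1"
    and nX: "opnorm N X \<le> 2" and nXa: "opnorm N (madj X) \<le> 2"
    and nY: "opnorm N Y \<le> 2" and nYa: "opnorm N (madj Y) \<le> 2"
  shows "opnorm N (Dev N (a * cnj b) X Y)
     \<le> 4 * (opnorm N (mdiff (mmul N X Y) (mscale a Z)) + opnorm N (mdiff (mmul N Y X) (mscale b Z)))
       + 4 * opnorm N (mdiff (mmul N X (madj X)) mone) + opnorm N (mdiff (mmul N Y (madj Y)) mone)"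
proof -
  define w where "w = a * cnj b"
  have w: "cmod w = 1" using a b by (simp add: w_def norm_mult)
  have bb: "cnj b * b = 1" using unit_cnj[OF b] .
  define e1 where "e1 = opnorm N (mdiff (mmul N X Y) (mscale a Z))"
  define e2 where "e2 = opnorm N (mdiff (mmul N Y X) (mscale b Z))"
  define f1 where "f1 = opnorm N (mdiff (mmul N X (madj X)) mone)"
  define f2 where "f2 = opnorm N (mdiff (mmul N Y (madj Y)) mone)"
  have e1: "e1 \<ge> 0" and e2: "e2 \<ge> 0" and f1: "f1 \<ge> 0" and f2: "f2 \<ge> 0"
    unfolding e1_def e2_def f1_def f2_def by (simp_all add: opnorm_nonneg)
  have h1: "opnorm N (mdiff (mmul N X Y) (mscale w (mmul N Y X))) \<le> e1 + e2"
  proof -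
    have "opnorm N (mdiff (mscale a Z) (mscale w (mmul N Y X))) \<le> cmod (- w) * e2"
      unfolding e2_def
    proof (rule opnorm_scale_le)
      fix i j
      have "- w * (mmul N Y X i j - b * Z i j) = a * (cnj b * b) * Z i j - w * mmul N Y X i j"
        unfolding w_def by (simp add: algebra_simps)
      then show "mdiff (mscale a Z) (mscale w (mmul N Y X)) i j
          = - w * mdiff (mmul N Y X) (mscale b Z) i j"
        unfolding mdiff_def mscale_def bb by simp
    qed
    then have "opnorm N (mdiff (mscale a Z) (mscale w (mmul N Y X))) \<le> e2" using w by simp
    moreover have "opnorm N (mdiff (mmul N X Y) (mscale w (mmul N Y X)))
       \<le> e1 + opnorm N (mdiff (mscale a Z) (mscale w (mmul N Y X)))"
      unfolding e1_def by (rule opnorm_diff_tri)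
    ultimately show ?thesis by simp
  qed
  define M where "M = mmul N (mmul N Y (mmul N X (madj X))) (madj Y)"
  have h2: "opnorm N (mdiff (Wf N X Y) (mscale w M)) \<le> 4 * (e1 + e2)"
  proof -
    have eq: "mscale w M = mmul N (mmul N (mscale w (mmul N Y X)) (madj X)) (madj Y)"
      unfolding M_def mmul_scale_left mmul_assoc ..
    have X1: "opnorm N (mdiff (mmul N (mmul N X Y) (madj X)) (mmul N (mscale w (mmul N Y X)) (madj X)))
        \<le> (e1 + e2) * 2"
      by (rule le_mult_bound[OF opnorm_mul_diff_r h1 nXa]) (use e1 e2 opnorm_nonneg in auto)
    have "opnorm N (mdiff (Wf N X Y) (mscale w M)) \<le> ((e1 + e2) * 2) * 2"
      unfolding eq Wf_def
      by (rule le_mult_bound[OF opnorm_mul_diff_r X1 nYa]) (use e1 e2 opnorm_nonneg in auto)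
    then show ?thesis by simp
  qed
  have h4: "opnorm N (mdiff M mone) \<le> 4 * f1 + f2"
  proof -
    have X2: "opnorm N (mdiff (mmul N Y (mmul N X (madj X))) (mmul N Y mone)) \<le> 2 * f1"
      unfolding f1_def
      by (rule le_mult_bound[OF opnorm_mul_diff_l nY order_refl]) (use opnorm_nonneg in auto)
    have A: "opnorm N (mdiff M (mmul N (mmul N Y mone) (madj Y))) \<le> 2 * f1 * 2"
      unfolding M_def
      by (rule le_mult_bound[OF opnorm_mul_diff_r X2 nYa]) (use f1 opnorm_nonneg in auto)
    have B: "opnorm N (mdiff (mmul N (mmul N Y mone) (madj Y)) mone) = f2"
      unfolding f2_def by (intro opnorm_cong mdiff_cong mmul_cong mmul_mone_right eqN_refl)
    show ?thesis using opnorm_diff_tri[of N M mone "mmul N (mmul N Y mone) (madj Y)"] A B by simp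
  qed
  have h5: "opnorm N (mdiff (Wf N X Y) (mscale w mone)) \<le> 4 * (e1 + e2) + (4 * f1 + f2)"
    using opnorm_diff_tri[of N "Wf N X Y" "mscale w mone" "mscale w M"] h2
      opnorm_scale_diff[OF w, of N M mone] h4 by simp
  have h6: "opnorm N (Dev N w X Y) \<le> opnorm N (mdiff (Wf N X Y) (mscale w mone))"
  proof -
    have "opnorm N (Dev N w X Y) \<le> cmod (- cnj w) * opnorm N (mdiff (Wf N X Y) (mscale w mone))"
    proof (rule opnorm_scale_le)
      fix i j
      have ww: "cnj w * w = 1" using unit_cnj[OF w] .
      have "- cnj w * (Wf N X Y i j - w * mone i j) = (cnj w * w) * mone i j - cnj w * Wf N X Y i j"
        by (simp add: algebra_simps)
      then show "Dev N w X Y i j = - cnj w * mdiff (Wf N X Y) (mscale w mone) i j"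
        unfolding Dev_def mdiff_def mscale_def ww by simp
    qed
    then show ?thesis using w by simp
  qed
  show ?thesis using h5 h6 unfolding w_def e1_def e2_def f1_def f2_def by simp
qed

lemma Wf_lip:
  assumes dA: "opnorm N (mdiff A X) \<le> d" and dB: "opnorm N (mdiff B Y) \<le> d"
    and dAa: "opnorm N (mdiff (madj A) (madj X)) \<le> d" and dBa: "opnorm N (mdiff (madj B) (madj Y)) \<le> d"
    and b1: "opnorm N A \<le> 3" "opnorm N B \<le> 3" "opnorm N (madj A) \<le> 3" "opnorm N (madj B) \<le> 3"
    and b2: "opnorm N X \<le> 3" "opnorm N Y \<le> 3" "opnorm N (madj X) \<le> 3" "opnorm N (madj Y) \<le> 3"
  shows "opnorm N (mdiff (Wf N A B) (Wf N X Y)) \<le> 108 * d"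
proof -
  have d0: "d \<ge> 0" using dA opnorm_nonneg[of N "mdiff A X"] by simp
  have s1: "opnorm N (mdiff (mmul N A B) (mmul N X Y)) \<le> 6 * d"
  proof -
    have "opnorm N (mdiff (mmul N A B) (mmul N X Y)) \<le> opnorm N (mdiff A X) * opnorm N B + opnorm N X * opnorm N (mdiff B Y)"
      by (rule opnorm_mul_diff)
    also have "\<dots> \<le> d * 3 + 3 * d"
      by (intro add_mono mult_mono) (use dA dB b1 b2 d0 opnorm_nonneg in auto)
    finally show ?thesis by simp
  qed
  have nXY: "opnorm N (mmul N X Y) \<le> 9"
    using opnorm_mul[of N X Y] mult_mono[OF b2(1) b2(2)] opnorm_nonneg[of N X] opnorm_nonneg[of N Y] by simp
  have s2: "opnorm N (mdiff (mmul N (mmul N A B) (madj A)) (mmul N (mmul N X Y) (madj X))) \<le> 27 * d"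
  proof -
    have "opnorm N (mdiff (mmul N (mmul N A B) (madj A)) (mmul N (mmul N X Y) (madj X)))
       \<le> opnorm N (mdiff (mmul N A B) (mmul N X Y)) * opnorm N (madj A) + opnorm N (mmul N X Y) * opnorm N (mdiff (madj A) (madj X))"
      by (rule opnorm_mul_diff)
    also have "\<dots> \<le> (6 * d) * 3 + 9 * d"
      by (intro add_mono mult_mono) (use s1 dAa b1 nXY d0 opnorm_nonneg in auto)
    finally show ?thesis by simp
  qed
  have nXYX: "opnorm N (mmul N (mmul N X Y) (madj X)) \<le> 27"
    using opnorm_mul[of N "mmul N X Y" "madj X"] mult_mono[OF nXY b2(3)] opnorm_nonneg[of N "mmul N X Y"]
      opnorm_nonneg[of N "madj X"] by simp
  have "opnorm N (mdiff (Wf N A B) (Wf N X Y))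
     \<le> opnorm N (mdiff (mmul N (mmul N A B) (madj A)) (mmul N (mmul N X Y) (madj X))) * opnorm N (madj B)
       + opnorm N (mmul N (mmul N X Y) (madj X)) * opnorm N (mdiff (madj B) (madj Y))"
    unfolding Wf_def by (rule opnorm_mul_diff)
  also have "\<dots> \<le> (27 * d) * 3 + 27 * d"
    by (intro add_mono mult_mono) (use s2 dBa b1 nXYX d0 opnorm_nonneg in auto)
  finally show ?thesis by simp
qed


lemma amp_Wf: assumes n: "n \<ge> 1" and jk: "j \<le> k"
  shows "eqN (n^k) (Wf (n^k) (amp n j k X) (amp n j k Y)) (amp n j k (Wf (n^j) X Y))"
proof -
  have s1: "eqN (n^k) (mmul (n^k) (amp n j k X) (amp n j k Y)) (amp n j k (mmul (n^j) X Y))"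
    by (rule amp_mmul[OF n jk])
  have s2: "eqN (n^k) (mmul (n^k) (mmul (n^k) (amp n j k X) (amp n j k Y)) (madj (amp n j k X)))
                      (amp n j k (mmul (n^j) (mmul (n^j) X Y) (madj X)))"
    unfolding amp_madj[symmetric]
    by (rule eqN_trans[OF mmul_cong[OF s1 eqN_refl] amp_mmul[OF n jk]])
  have s3: "eqN (n^k) (Wf (n^k) (amp n j k X) (amp n j k Y))
                      (amp n j k (Wf (n^j) X Y))"
    unfolding Wf_def amp_madj[symmetric]
    by (rule eqN_trans[OF mmul_cong[OF s2[unfolded amp_madj[symmetric]] eqN_refl] amp_mmul[OF n jk]])
  then show ?thesis .
qed

lemma amp_Dev: assumes n: "n \<ge> 1" and jk: "j \<le> k"
  shows "eqN (n^k) (Dev (n^k) w (amp n j k X) (amp n j k Y)) (amp n j k (Dev (n^j) w X Y))"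
  unfolding Dev_def amp_mdiff amp_mscale amp_mone[OF n]
  by (intro mdiff_cong mscale_cong eqN_refl amp_Wf[OF n jk])

lemma LT_cong: assumes "eqN N D D'" shows "LT N D = LT N D'"
proof -
  have "\<And>p. mtr N (cpow N D p) = mtr N (cpow N D' p)" by (rule mtr_cong[OF cpow_cong[OF assms]])
  then show ?thesis unfolding LT_def by (simp only:)
qed

lemma LT_amp: assumes n: "n \<ge> 1" and jk: "j \<le> k" and D: "opnorm (n^j) D < 1"
  shows "LT (n^k) (amp n j k D) = of_nat (n^(k-j)) * LT (n^j) D"
proof -
  have t: "- mtr (n^k) (cpow (n^k) (amp n j k D) (Suc p)) / of_nat (Suc p)
        = of_nat (n^(k-j)) * (- mtr (n^j) (cpow (n^j) D (Suc p)) / of_nat (Suc p))" for p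
  proof -
    have "mtr (n^k) (cpow (n^k) (amp n j k D) (Suc p)) = mtr (n^k) (amp n j k (cpow (n^j) D (Suc p)))"
      by (rule mtr_cong[OF amp_cpow[OF n jk]])
    also have "\<dots> = of_nat (n^(k-j)) * mtr (n^j) (cpow (n^j) D (Suc p))" by (rule amp_mtr[OF n jk])
    finally show ?thesis by simp
  qed
  show ?thesis unfolding LT_def t
    by (rule suminf_mult[OF LT_exp(1)[OF D]])
qed

lemma Dev_diff_bound:
  assumes w: "cmod w = 1"
  shows "opnorm N (Dev N w A B) \<le> opnorm N (Dev N w X Y) + opnorm N (mdiff (Wf N A B) (Wf N X Y))"
proof -
  have "opnorm N (mdiff (Dev N w A B) (Dev N w X Y)) \<le> cmod (- cnj w) * opnorm N (mdiff (Wf N A B) (Wf N X Y))"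
    by (rule opnorm_scale_le) (simp add: Dev_def mdiff_def mscale_def algebra_simps)
  then have "opnorm N (mdiff (Dev N w A B) (Dev N w X Y)) \<le> opnorm N (mdiff (Wf N A B) (Wf N X Y))"
    using w by simp
  then show ?thesis using opnorm_le_diff[of N "Dev N w A B" "Dev N w X Y"] by simp
qed

lemma lpath_diff:
  assumes t: "t \<in> {0..1}"
  shows "opnorm N (mdiff (lpath P Q t) Q) \<le> opnorm N (mdiff P Q)"
proof -
  have "opnorm N (mdiff (lpath P Q t) Q) \<le> cmod (1 - complex_of_real t) * opnorm N (mdiff P Q)"
    by (rule opnorm_scale_le) (simp add: lpath_def mdiff_def algebra_simps)
  also have "cmod (1 - complex_of_real t) = 1 - t"
    using t by (metis atLeastAtMost_iff diff_ge_0_iff_ge norm_of_real of_real_1 of_real_diff abs_of_nonneg)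
  also have "(1 - t) * opnorm N (mdiff P Q) \<le> 1 * opnorm N (mdiff P Q)"
    using t opnorm_nonneg[of N "mdiff P Q"] by (intro mult_right_mono) auto
  finally show ?thesis by simp
qed

lemma contm_Dev: "contm A \<Longrightarrow> contm B \<Longrightarrow> contm (\<lambda>t. Dev N w (A t) (B t))"
  unfolding Dev_def Wf_def
  by (intro contm_mdiff contm_const contm_mscale contm_mmul contm_madj)

lemma level_step:
  fixes n :: nat and w :: complex
  assumes n: "n \<ge> 1" and w: "cmod w = 1" and jk: "j \<le> k"
    and Xk: "opnorm (n^k) Xk \<le> 2" "opnorm (n^k) (madj Xk) \<le> 2"
    and Yk: "opnorm (n^k) Yk \<le> 2" "opnorm (n^k) (madj Yk) \<le> 2"
    and ek: "opnorm (n^k) (Dev (n^k) w Xk Yk) \<le> 1/4"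
    and ej: "opnorm (n^j) (Dev (n^j) w Xj Yj) < 1"
    and cX: "opnorm (n^k) (mdiff Xk (amp n j k Xj)) \<le> 1/1000"
    and cY: "opnorm (n^k) (mdiff Yk (amp n j k Yj)) \<le> 1/1000"
  shows "real (n^(k-j)) * \<bar>Im (LT (n^j) (Dev (n^j) w Xj Yj))\<bar> \<le> 2 * real (n^k) * opnorm (n^k) (Dev (n^k) w Xk Yk)"
proof -
  define N where "N = n^k"
  define A where "A = lpath (amp n j k Xj) Xk"
  define B where "B = lpath (amp n j k Yj) Yk"
  define d :: real where "d = 1/1000"
  have dA: "opnorm N (mdiff (A t) Xk) \<le> d" if t: "t \<in> {0..1}" for t
    using lpath_diff[OF t, of N "amp n j k Xj" Xk] cX opnorm_diff_comm[of N Xk]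
    unfolding A_def N_def d_def by simp
  have dB: "opnorm N (mdiff (B t) Yk) \<le> d" if t: "t \<in> {0..1}" for t
    using lpath_diff[OF t, of N "amp n j k Yj" Yk] cY opnorm_diff_comm[of N Yk]
    unfolding B_def N_def d_def by simp
  have dAa: "opnorm N (mdiff (madj (A t)) (madj Xk)) \<le> d" if t: "t \<in> {0..1}" for t
    using opnorm_adj[of N "mdiff (A t) Xk"] dA[OF t] by (simp add: madj_mdiff)
  have dBa: "opnorm N (mdiff (madj (B t)) (madj Yk)) \<le> d" if t: "t \<in> {0..1}" for t
    using opnorm_adj[of N "mdiff (B t) Yk"] dB[OF t] by (simp add: madj_mdiff)
  have bnd: "opnorm N (Dev N w (A t) (B t)) \<le> 1/2" if t: "t \<in> {0..1}" for t
  proof -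
    have b1: "opnorm N (A t) \<le> 3" using opnorm_le_diff[of N "A t" Xk] dA[OF t] Xk unfolding N_def d_def by simp
    have b2: "opnorm N (B t) \<le> 3" using opnorm_le_diff[of N "B t" Yk] dB[OF t] Yk unfolding N_def d_def by simp
    have b3: "opnorm N (madj (A t)) \<le> 3" using opnorm_le_diff[of N "madj (A t)" "madj Xk"] dAa[OF t] Xk unfolding N_def d_def by simp
    have b4: "opnorm N (madj (B t)) \<le> 3" using opnorm_le_diff[of N "madj (B t)" "madj Yk"] dBa[OF t] Yk unfolding N_def d_def by simp
    have "opnorm N (mdiff (Wf N (A t) (B t)) (Wf N Xk Yk)) \<le> 108 * d"
      by (rule Wf_lip[OF dA[OF t] dB[OF t] dAa[OF t] dBa[OF t] b1 b2 b3 b4])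
        (use Xk Yk in \<open>simp_all add: N_def\<close>)
    then show ?thesis using Dev_diff_bound[OF w, of N "A t" "B t" Xk Yk] ek unfolding N_def d_def by simp
  qed
  have cont: "contm (\<lambda>t. Dev N w (A t) (B t))"
    unfolding A_def B_def by (intro contm_Dev contm_lpath)
  have cc: "cmod (cnj w ^ N) = 1" using w by (simp add: norm_power)
  have "Im (LT N (Dev N w (A 1) (B 1))) = Im (LT N (Dev N w (A 0) (B 0)))"
    by (rule path_const[OF cont bnd _ _ cc]) (auto intro: det_phase)
  then have eqI: "Im (LT N (Dev N w Xk Yk)) = Im (LT N (Dev N w (amp n j k Xj) (amp n j k Yj)))"
    unfolding A_def B_def by simp
  also have "LT N (Dev N w (amp n j k Xj) (amp n j k Yj)) = LT N (amp n j k (Dev (n^j) w Xj Yj))"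
    unfolding N_def by (rule LT_cong[OF amp_Dev[OF n jk]])
  also have "\<dots> = of_nat (n^(k-j)) * LT (n^j) (Dev (n^j) w Xj Yj)"
    unfolding N_def by (rule LT_amp[OF n jk ej])
  finally have "Im (LT N (Dev N w Xk Yk)) = real (n^(k-j)) * Im (LT (n^j) (Dev (n^j) w Xj Yj))"
    by simp
  then have "real (n^(k-j)) * \<bar>Im (LT (n^j) (Dev (n^j) w Xj Yj))\<bar> = \<bar>Im (LT N (Dev N w Xk Yk))\<bar>"
    by (simp add: abs_mult)
  also have "\<dots> \<le> cmod (LT N (Dev N w Xk Yk))" by (rule abs_Im_le_cmod)
  also have "\<dots> \<le> 2 * real N * opnorm N (Dev N w Xk Yk)"
    by (rule LT_bound) (use ek in \<open>simp_all add: N_def\<close>)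
  finally show ?thesis unfolding N_def .
qed


lemma hard_dir:
  fixes n :: nat and \<omega> :: complex
  assumes n: "n \<ge> 1" and w: "cmod \<omega> = 1" and pr: "proj_rep_lift n ut c" and ob: "ob_scalar c = \<omega>"
  shows "\<exists>l::nat. \<omega> ^ (n ^ l) = 1"
proof -
  define X where "X = ut (1,0)"
  define Y where "Y = ut (0,1)"
  define Z where "Z = ut (1,1)"
  define a where "a = c (1,0) (0,1)"
  define b where "b = c (0,1) (1,0)"
  have a: "cmod a = 1" and b: "cmod b = 1" using pr unfolding proj_rep_lift_def a_def b_def by auto
  have wab: "\<omega> = a * cnj b" using ob unfolding ob_scalar_def a_def b_def by simp
  have uX: "uhf_unitary n X" and uY: "uhf_unitary n Y" using pr unfolding proj_rep_lift_def X_def Y_def by auto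
  have z1: "z2add (1,0) (0,1) = (1,1)" and z2: "z2add (0,1) (1,0) = (1,1)" by (simp_all add: z2add_def)
  have "uhf_eq n (uhf_mul n (ut (1,0)) (ut (0,1))) (uhf_scale (c (1,0) (0,1)) (ut (z2add (1,0) (0,1))))"
    using pr unfolding proj_rep_lift_def by blast
  then have rel1: "(\<lambda>k. opnorm (n^k) (mdiff (mmul (n^k) (X k) (Y k)) (mscale a (Z k)))) \<longlonglongrightarrow> 0"
    unfolding z1 uhf_eq_def uhf_mul_def uhf_scale_def X_def Y_def Z_def a_def .
  have "uhf_eq n (uhf_mul n (ut (0,1)) (ut (1,0))) (uhf_scale (c (0,1) (1,0)) (ut (z2add (0,1) (1,0))))"
    using pr unfolding proj_rep_lift_def by blast
  then have rel2: "(\<lambda>k. opnorm (n^k) (mdiff (mmul (n^k) (Y k) (X k)) (mscale b (Z k)))) \<longlonglongrightarrow> 0"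
    unfolding z2 uhf_eq_def uhf_mul_def uhf_scale_def X_def Y_def Z_def b_def .
  have elX: "uhf_elem n X" and elY: "uhf_elem n Y" using uX uY unfolding uhf_unitary_def by auto
  have uXa: "(\<lambda>k. opnorm (n^k) (mdiff (mmul (n^k) (madj (X k)) (X k)) mone)) \<longlonglongrightarrow> 0"
   and uXb: "(\<lambda>k. opnorm (n^k) (mdiff (mmul (n^k) (X k) (madj (X k))) mone)) \<longlonglongrightarrow> 0"
    using uX unfolding uhf_unitary_def uhf_eq_def uhf_mul_def uhf_adj_def uhf_one_def by auto
  have uYa: "(\<lambda>k. opnorm (n^k) (mdiff (mmul (n^k) (madj (Y k)) (Y k)) mone)) \<longlonglongrightarrow> 0"
   and uYb: "(\<lambda>k. opnorm (n^k) (mdiff (mmul (n^k) (Y k) (madj (Y k))) mone)) \<longlonglongrightarrow> 0"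
    using uY unfolding uhf_unitary_def uhf_eq_def uhf_mul_def uhf_adj_def uhf_one_def by auto
  define e where "e = (\<lambda>k. opnorm (n^k) (Dev (n^k) \<omega> (X k) (Y k)))"
  have ev_small: "\<forall>\<^sub>F k in sequentially. f k < 1" if "f \<longlonglongrightarrow> 0" for f :: "nat \<Rightarrow> real"
    using order_tendstoD(2)[OF that, of 1] by simp
  have evb: "\<forall>\<^sub>F k in sequentially. opnorm (n^k) (X k) \<le> 2 \<and> opnorm (n^k) (madj (X k)) \<le> 2 \<and>
      opnorm (n^k) (Y k) \<le> 2 \<and> opnorm (n^k) (madj (Y k)) \<le> 2"
  proof -
    have "\<forall>\<^sub>F k in sequentially. opnorm (n^k) (mdiff (mmul (n^k) (madj (X k)) (X k)) mone) < 1 \<and>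
      opnorm (n^k) (mdiff (mmul (n^k) (X k) (madj (X k))) mone) < 1 \<and>
      opnorm (n^k) (mdiff (mmul (n^k) (madj (Y k)) (Y k)) mone) < 1 \<and>
      opnorm (n^k) (mdiff (mmul (n^k) (Y k) (madj (Y k))) mone) < 1"
      by (intro eventually_conj ev_small uXa uXb uYa uYb)
    then show ?thesis
    proof (rule eventually_mono)
      fix k assume h: "opnorm (n^k) (mdiff (mmul (n^k) (madj (X k)) (X k)) mone) < 1 \<and>
        opnorm (n^k) (mdiff (mmul (n^k) (X k) (madj (X k))) mone) < 1 \<and>
        opnorm (n^k) (mdiff (mmul (n^k) (madj (Y k)) (Y k)) mone) < 1 \<and>
        opnorm (n^k) (mdiff (mmul (n^k) (Y k) (madj (Y k))) mone) < 1"
      show "opnorm (n^k) (X k) \<le> 2 \<and> opnorm (n^k) (madj (X k)) \<le> 2 \<and>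
          opnorm (n^k) (Y k) \<le> 2 \<and> opnorm (n^k) (madj (Y k)) \<le> 2"
        using h norm_from_unitary[of "n^k" "X k"] norm_from_unitary[of "n^k" "madj (X k)"]
          norm_from_unitary[of "n^k" "Y k"] norm_from_unitary[of "n^k" "madj (Y k)"] by simp
    qed
  qed
  define bd where "bd = (\<lambda>k. 4 * (opnorm (n^k) (mdiff (mmul (n^k) (X k) (Y k)) (mscale a (Z k)))
        + opnorm (n^k) (mdiff (mmul (n^k) (Y k) (X k)) (mscale b (Z k))))
       + 4 * opnorm (n^k) (mdiff (mmul (n^k) (X k) (madj (X k))) mone)
       + opnorm (n^k) (mdiff (mmul (n^k) (Y k) (madj (Y k))) mone))"
  have bd0: "bd \<longlonglongrightarrow> 0"
  proof -
    have "bd \<longlonglongrightarrow> 4 * (0 + 0) + 4 * 0 + 0" unfolding bd_def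
      by (intro tendsto_intros rel1 rel2 uXb uYb)
    then show ?thesis by simp
  qed
  have ebd: "\<forall>\<^sub>F k in sequentially. e k \<le> bd k"
    using evb
  proof (rule eventually_mono)
    fix k assume h: "opnorm (n^k) (X k) \<le> 2 \<and> opnorm (n^k) (madj (X k)) \<le> 2 \<and>
      opnorm (n^k) (Y k) \<le> 2 \<and> opnorm (n^k) (madj (Y k)) \<le> 2"
    show "e k \<le> bd k" unfolding e_def bd_def wab
      by (rule comm_est[OF a b]) (use h in auto)
  qed
  have e0: "e \<longlonglongrightarrow> 0"
  proof (rule tendsto_sandwich[OF _ ebd tendsto_const bd0])
    show "\<forall>\<^sub>F k in sequentially. 0 \<le> e k" unfolding e_def by (simp add: opnorm_nonneg)
  qed
  have eve: "\<forall>\<^sub>F k in sequentially. e k \<le> 1/4"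
    using order_tendstoD(2)[OF e0, of "1/4"] by (auto elim: eventually_mono)
  obtain K1 where K1: "\<And>k. k \<ge> K1 \<Longrightarrow> (opnorm (n^k) (X k) \<le> 2 \<and> opnorm (n^k) (madj (X k)) \<le> 2 \<and>
      opnorm (n^k) (Y k) \<le> 2 \<and> opnorm (n^k) (madj (Y k)) \<le> 2) \<and> e k \<le> 1/4"
    using eventually_conj[OF evb eve] unfolding eventually_sequentially by blast
  have "\<exists>K. \<forall>j\<ge>K. \<forall>k\<ge>j. opnorm (n ^ k) (mdiff (X k) (amp n j k (X j))) < 1/1000"
    using elX unfolding uhf_elem_def by (elim allE[of _ "1/1000"]) simp
  then obtain K2 where K2: "\<And>j k. j \<ge> K2 \<Longrightarrow> k \<ge> j \<Longrightarrow> opnorm (n ^ k) (mdiff (X k) (amp n j k (X j))) < 1/1000"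
    by blast
  have "\<exists>K. \<forall>j\<ge>K. \<forall>k\<ge>j. opnorm (n ^ k) (mdiff (Y k) (amp n j k (Y j))) < 1/1000"
    using elY unfolding uhf_elem_def by (elim allE[of _ "1/1000"]) simp
  then obtain K3 where K3: "\<And>j k. j \<ge> K3 \<Longrightarrow> k \<ge> j \<Longrightarrow> opnorm (n ^ k) (mdiff (Y k) (amp n j k (Y j))) < 1/1000"
    by blast
  define j where "j = max K1 (max K2 K3)"
  define Lj where "Lj = LT (n^j) (Dev (n^j) \<omega> (X j) (Y j))"
  have ej: "opnorm (n^j) (Dev (n^j) \<omega> (X j) (Y j)) < 1" using K1[of j] unfolding j_def e_def by simp
  have main: "\<bar>Im Lj\<bar> \<le> 2 * real (n^j) * e k" if k: "k \<ge> j" for k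
  proof -
    have kK: "k \<ge> K1" "k \<ge> K2" "k \<ge> K3" "j \<ge> K2" "j \<ge> K3" using k unfolding j_def by auto
    have st: "real (n^(k-j)) * \<bar>Im Lj\<bar> \<le> 2 * real (n^k) * e k"
      unfolding Lj_def e_def
      by (rule level_step[OF n w k]) (use K1[OF kK(1)] K2[OF kK(4) k] K3[OF kK(5) k] ej in \<open>auto simp: e_def\<close>)
    have nk: "real (n^k) = real (n^j) * real (n^(k-j))" using pow_split[OF k, of n] by simp
    have pos: "real (n^(k-j)) > 0" using n by simp
    have "real (n^(k-j)) * \<bar>Im Lj\<bar> \<le> real (n^(k-j)) * (2 * real (n^j) * e k)"
      using st nk by (simp add: algebra_simps)
    then show ?thesis using pos by simp
  qed
  have "\<bar>Im Lj\<bar> \<le> 2 * real (n^j) * 0"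
  proof (rule tendsto_le[OF _ _ tendsto_const])
    show "(\<lambda>k. 2 * real (n^j) * e k) \<longlonglongrightarrow> 2 * real (n^j) * 0" by (intro tendsto_intros e0)
    show "\<forall>\<^sub>F k in sequentially. \<bar>Im Lj\<bar> \<le> 2 * real (n^j) * e k"
      unfolding eventually_sequentially using main by blast
  qed simp
  then have im0: "Im Lj = 0" by simp
  obtain r where r: "r \<ge> 0" "det (mat_of (n^j) (mdiff mone (Dev (n^j) \<omega> (X j) (Y j)))) = cnj \<omega> ^ (n^j) * of_real r"
    using det_phase by blast
  have "exp Lj = cnj \<omega> ^ (n^j) * of_real r" unfolding Lj_def using LT_exp(2)[OF ej] r by simp
  then have "exp (\<i> * of_real (Im Lj)) = cnj \<omega> ^ (n^j)"
    by (rule phase_from_exp) (use r w in \<open>simp_all add: norm_power\<close>)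
  then have "cnj (\<omega> ^ (n^j)) = 1" using im0 by simp
  then have "\<omega> ^ (n^j) = 1" by (metis complex_cnj_cnj complex_cnj_one)
  then show ?thesis by blast
qed


definition Mrep :: "complex \<Rightarrow> nat \<Rightarrow> z2 \<Rightarrow> cmat" where
  "Mrep w L g = (\<lambda>i j. if int i = (int j + snd g) mod int L then w powi (int i * fst g) else 0)"

definition crep :: "complex \<Rightarrow> z2 \<Rightarrow> z2 \<Rightarrow> complex" where
  "crep w g h = w powi (- snd g * fst h)"

lemma pw_cong: fixes w :: complex assumes wL: "w ^ L = 1" and w1: "cmod w = 1" and d: "int L dvd (a - b)" shows "w powi a = w powi b"
proof -
  have w0: "w \<noteq> 0" using w1 by auto
  obtain t where t: "a - b = int L * t" using d by (auto elim: dvdE)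
  have "w powi a = w powi (b + int L * t)" using t by (simp add: algebra_simps)
  also have "\<dots> = w powi b * w powi (int L * t)" using w0 by (simp add: power_int_add)
  also have "w powi (int L * t) = (w powi int L) powi t" by (rule power_int_mult)
  also have "\<dots> = 1" using wL by simp
  finally show ?thesis by simp
qed

lemma pw_add: "cmod w = 1 \<Longrightarrow> w powi (a + b) = w powi a * w powi b"
  by (rule power_int_add) auto

lemma pw_unit: "cmod w = 1 \<Longrightarrow> cmod (w powi a) = 1"
  by (simp add: norm_power_int)

lemma modchar: assumes "0 \<le> x" "x < int L" shows "(x = y mod int L) \<longleftrightarrow> int L dvd (x - y)"
proof
  assume "x = y mod int L"
  then have "x mod int L = y mod int L" using assms by simp
  then show "int L dvd (x - y)" by (simp add: mod_eq_dvd_iff)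
next
  assume "int L dvd (x - y)"
  then have "x mod int L = y mod int L" by (simp add: mod_eq_dvd_iff)
  then show "x = y mod int L" using assms by simp
qed

lemma sel: assumes "L > 0" shows "(int s = t mod int L) \<longleftrightarrow> s = nat (t mod int L)"
  using assms by auto

lemma sum_sel: assumes L: "L > 0"
  shows "(\<Sum>s<L. if int s = t mod int L then f s else 0) = f (nat (t mod int L))"
proof -
  have "(\<Sum>s<L. if int s = t mod int L then f s else 0) = (\<Sum>s<L. if s = nat (t mod int L) then f s else 0)"
    using sel[OF L] by simp
  also have "\<dots> = f (nat (t mod int L))" using L by (simp add: sum.delta nat_less_iff)
  finally show ?thesis .
qed

lemma eq_of_dvd: assumes "i < L" "j < L" "int L dvd (int i - int j)" shows "i = j"
proof -
  have "int i mod int L = int j mod int L" using assms(3) by (simp add: mod_eq_dvd_iff)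
  then show ?thesis using assms(1,2) by simp
qed

lemma rep_mul:
  assumes wL: "w ^ L = 1" and L: "L > 0" and w1: "cmod w = 1"
  shows "eqN L (mmul L (Mrep w L g) (Mrep w L h)) (mscale (crep w g h) (Mrep w L (z2add g h)))"
  unfolding eqN_def
proof (intro allI impI)
  fix i j assume i: "i < L" and j: "j < L"
  obtain p q where g: "g = (p,q)" by (cases g)
  obtain p' q' where h: "h = (p',q')" by (cases h)
  define s1 where "s1 = nat ((int j + q') mod int L)"
  have s1L: "s1 < L" unfolding s1_def using L by (simp add: nat_less_iff)
  have s1e: "int s1 = (int j + q') mod int L" unfolding s1_def using L by simp
  have ds1: "int L dvd (int s1 - (int j + q'))" unfolding s1e by (simp add: mod_eq_dvd_iff[symmetric])
  have "mmul L (Mrep w L g) (Mrep w L h) i j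
      = (\<Sum>s<L. if int s = (int j + q') mod int L then Mrep w L g i s * w powi (int s * p') else 0)"
    unfolding mmul_def Mrep_def g h by (intro sum.cong refl) auto
  also have "\<dots> = Mrep w L g i s1 * w powi (int s1 * p')"
    unfolding s1_def by (rule sum_sel[OF L])
  also have "\<dots> = mscale (crep w g h) (Mrep w L (z2add g h)) i j"
  proof -
    have c1: "(int i = (int s1 + q) mod int L) \<longleftrightarrow> int L dvd (int i - (int s1 + q))"
      by (rule modchar) (use i in auto)
    have c2: "(int i = (int j + (q + q')) mod int L) \<longleftrightarrow> int L dvd (int i - (int j + (q + q')))"
      by (rule modchar) (use i in auto)
    have c12: "int L dvd (int i - (int s1 + q)) \<longleftrightarrow> int L dvd (int i - (int j + (q + q')))"
    proof -
      have "int i - (int j + (q + q')) = (int i - (int s1 + q)) + (int s1 - (int j + q'))" by simp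
      then show ?thesis using ds1 by (metis dvd_add_left_iff)
    qed
    show ?thesis
    proof (cases "int L dvd (int i - (int s1 + q))")
      case True
      have "w powi (int i * p) * w powi (int s1 * p') = w powi (int i * p + int s1 * p')"
        by (rule pw_add[OF w1, symmetric])
      also have "\<dots> = w powi (- q * p' + int i * (p + p'))"
      proof (rule pw_cong[OF wL w1])
        have "int i * p + int s1 * p' - (- q * p' + int i * (p + p')) = - (int i - (int s1 + q)) * p'"
          by (simp add: algebra_simps)
        moreover have "int L dvd (- (int i - (int s1 + q)) * p')"
          using True by (intro dvd_mult2) (simp add: dvd_diff_commute)
        ultimately show "int L dvd (int i * p + int s1 * p' - (- q * p' + int i * (p + p')))"
          by simp
      qed
      also have "\<dots> = w powi (- q * p') * w powi (int i * (p + p'))" by (rule pw_add[OF w1])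
      finally show ?thesis
        unfolding Mrep_def mscale_def crep_def g h z2add_def using True c1 c2 c12 by simp
    next
      case False
      then show ?thesis
        unfolding Mrep_def mscale_def crep_def g h z2add_def using c1 c2 c12 by simp
    qed
  qed
  finally show "mmul L (Mrep w L g) (Mrep w L h) i j = mscale (crep w g h) (Mrep w L (z2add g h)) i j" .
qed

lemma rep_unit1:
  assumes wL: "w ^ L = 1" and L: "L > 0" and w1: "cmod w = 1"
  shows "eqN L (mmul L (madj (Mrep w L g)) (Mrep w L g)) mone"
  unfolding eqN_def
proof (intro allI impI)
  fix i j assume i: "i < L" and j: "j < L"
  obtain p q where g: "g = (p,q)" by (cases g)
  define s2 where "s2 = nat ((int i + q) mod int L)"
  have s2e: "int s2 = (int i + q) mod int L" unfolding s2_def using L by simp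
  have "mmul L (madj (Mrep w L g)) (Mrep w L g) i j
      = (\<Sum>s<L. if int s = (int i + q) mod int L then cnj (w powi (int s * p)) * Mrep w L g s j else 0)"
    unfolding mmul_def madj_def Mrep_def g by (intro sum.cong refl) auto
  also have "\<dots> = cnj (w powi (int s2 * p)) * Mrep w L g s2 j"
    unfolding s2_def by (rule sum_sel[OF L])
  also have "\<dots> = mone i j"
  proof (cases "i = j")
    case True
    then show ?thesis unfolding Mrep_def g mone_def using s2e unit_cnj[OF pw_unit[OF w1]] by simp
  next
    case False
    have "(int i + q) mod int L \<noteq> (int j + q) mod int L"
    proof
      assume "(int i + q) mod int L = (int j + q) mod int L"
      then have "int L dvd (int i - int j)" by (simp add: mod_eq_dvd_iff)
      then show False using eq_of_dvd[OF i j] False by simp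
    qed
    then show ?thesis unfolding Mrep_def g mone_def using s2e False by simp
  qed
  finally show "mmul L (madj (Mrep w L g)) (Mrep w L g) i j = mone i j" .
qed

lemma rep_unit2:
  assumes wL: "w ^ L = 1" and L: "L > 0" and w1: "cmod w = 1"
  shows "eqN L (mmul L (Mrep w L g) (madj (Mrep w L g))) mone"
  unfolding eqN_def
proof (intro allI impI)
  fix i j assume i: "i < L" and j: "j < L"
  obtain p q where g: "g = (p,q)" by (cases g)
  define s3 where "s3 = nat ((int i - q) mod int L)"
  have s3L: "s3 < L" unfolding s3_def using L by (simp add: nat_less_iff)
  have s3e: "int s3 = (int i - q) mod int L" unfolding s3_def using L by simp
  have cnd: "(int i = (int s + q) mod int L) \<longleftrightarrow> (int s = (int i - q) mod int L)" if s: "s < L" for s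
  proof -
    have "(int i = (int s + q) mod int L) \<longleftrightarrow> int L dvd (int i - (int s + q))"
      by (rule modchar) (use i in auto)
    also have "\<dots> \<longleftrightarrow> int L dvd (int s - (int i - q))"
    proof -
      have "int s - (int i - q) = - (int i - (int s + q))" by simp
      then show ?thesis by (metis dvd_minus_iff)
    qed
    also have "\<dots> \<longleftrightarrow> (int s = (int i - q) mod int L)"
      by (rule modchar[symmetric]) (use s in auto)
    finally show ?thesis .
  qed
  have "mmul L (Mrep w L g) (madj (Mrep w L g)) i j
      = (\<Sum>s<L. if int s = (int i - q) mod int L then w powi (int i * p) * cnj (Mrep w L g j s) else 0)"
    unfolding mmul_def madj_def by (intro sum.cong refl) (auto simp: Mrep_def g cnd)
  also have "\<dots> = w powi (int i * p) * cnj (Mrep w L g j s3)"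
    unfolding s3_def by (rule sum_sel[OF L])
  also have "\<dots> = mone i j"
  proof (cases "i = j")
    case True
    have "int j = (int s3 + q) mod int L" using cnd[OF s3L] s3e True by simp
    then show ?thesis unfolding Mrep_def g mone_def using True unit_cnj[OF pw_unit[OF w1]]
      by (simp add: mult.commute)
  next
    case False
    have "int j \<noteq> (int s3 + q) mod int L"
    proof
      assume "int j = (int s3 + q) mod int L"
      then have "int L dvd (int j - (int s3 + q))" using modchar[of "int j" L] j by simp
      moreover have "int L dvd (int s3 - (int i - q))" unfolding s3e by (simp add: mod_eq_dvd_iff[symmetric])
      ultimately have "int L dvd ((int j - (int s3 + q)) + (int s3 - (int i - q)))" by (rule dvd_add)
      then have "int L dvd (int j - int i)" by simp
      then show False using eq_of_dvd[OF j i] False by simp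
    qed
    then show ?thesis unfolding Mrep_def g mone_def using False by simp
  qed
  finally show "mmul L (Mrep w L g) (madj (Mrep w L g)) i j = mone i j" .
qed


lemmas [trans] = eqN_trans

lemma ev_uhf_eq: assumes "\<And>k. k \<ge> l \<Longrightarrow> eqN (n^k) (x k) (y k)" shows "uhf_eq n x y"
  unfolding uhf_eq_def
proof (rule tendsto_eventually)
  show "\<forall>\<^sub>F k in sequentially. opnorm (n ^ k) (mdiff (x k) (y k)) = 0"
    unfolding eventually_sequentially
    using assms by (intro exI[of _ l] allI impI opnorm_zero) (auto simp: eqN_def mdiff_def)
qed

lemma easy_dir:
  fixes n :: nat and \<omega> :: complex
  assumes n: "n \<ge> 1" and w: "cmod \<omega> = 1" and wl: "\<omega> ^ (n ^ l) = 1"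
  shows "\<exists>ut c. proj_rep_lift n ut c \<and> ob_scalar c = \<omega>"
proof -
  define L where "L = n ^ l"
  have L: "L > 0" using n by (simp add: L_def)
  have wL: "\<omega> ^ L = 1" using wl by (simp add: L_def)
  define ut where "ut = (\<lambda>g k. amp n l k (Mrep \<omega> L g))"
  define c where "c = crep \<omega>"
  have unit: "uhf_unitary n (ut g)" for g
    unfolding uhf_unitary_def
  proof (intro conjI)
    show "uhf_elem n (ut g)" unfolding uhf_elem_def
    proof (intro allI impI)
      fix \<epsilon> :: real assume e: "\<epsilon> > 0"
      show "\<exists>K. \<forall>j\<ge>K. \<forall>k\<ge>j. opnorm (n ^ k) (mdiff (ut g k) (amp n j k (ut g j))) < \<epsilon>"
      proof (intro exI[of _ l] allI impI)
        fix j k assume j: "l \<le> j" and k: "j \<le> k"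
        have "amp n j k (ut g j) = ut g k" unfolding ut_def by (rule amp_comp[OF n j k])
        then show "opnorm (n ^ k) (mdiff (ut g k) (amp n j k (ut g j))) < \<epsilon>" using e by simp
      qed
    qed
    show "uhf_eq n (uhf_mul n (uhf_adj (ut g)) (ut g)) uhf_one"
    proof (rule ev_uhf_eq[of l])
      fix k assume k: "k \<ge> l"
      have "eqN (n^k) (mmul (n^k) (amp n l k (madj (Mrep \<omega> L g))) (amp n l k (Mrep \<omega> L g)))
                 (amp n l k (mmul (n^l) (madj (Mrep \<omega> L g)) (Mrep \<omega> L g)))"
        by (rule amp_mmul[OF n k])
      also have "eqN (n^k) (amp n l k (mmul (n^l) (madj (Mrep \<omega> L g)) (Mrep \<omega> L g))) (amp n l k mone)"
        by (rule amp_cong[OF n k]) (use rep_unit1[OF wL L w] in \<open>simp add: L_def\<close>)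
      finally show "eqN (n^k) (uhf_mul n (uhf_adj (ut g)) (ut g) k) (uhf_one k)"
        unfolding uhf_mul_def uhf_adj_def uhf_one_def ut_def amp_madj[symmetric] amp_mone[OF n] .
    qed
    show "uhf_eq n (uhf_mul n (ut g) (uhf_adj (ut g))) uhf_one"
    proof (rule ev_uhf_eq[of l])
      fix k assume k: "k \<ge> l"
      have "eqN (n^k) (mmul (n^k) (amp n l k (Mrep \<omega> L g)) (amp n l k (madj (Mrep \<omega> L g))))
                 (amp n l k (mmul (n^l) (Mrep \<omega> L g) (madj (Mrep \<omega> L g))))"
        by (rule amp_mmul[OF n k])
      also have "eqN (n^k) (amp n l k (mmul (n^l) (Mrep \<omega> L g) (madj (Mrep \<omega> L g)))) (amp n l k mone)"
        by (rule amp_cong[OF n k]) (use rep_unit2[OF wL L w] in \<open>simp add: L_def\<close>)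
      finally show "eqN (n^k) (uhf_mul n (ut g) (uhf_adj (ut g)) k) (uhf_one k)"
        unfolding uhf_mul_def uhf_adj_def uhf_one_def ut_def amp_madj[symmetric] amp_mone[OF n] .
    qed
  qed
  have rel: "uhf_eq n (uhf_mul n (ut g) (ut h)) (uhf_scale (c g h) (ut (z2add g h)))" for g h
  proof (rule ev_uhf_eq[of l])
    fix k assume k: "k \<ge> l"
    have "eqN (n^k) (mmul (n^k) (amp n l k (Mrep \<omega> L g)) (amp n l k (Mrep \<omega> L h)))
               (amp n l k (mmul (n^l) (Mrep \<omega> L g) (Mrep \<omega> L h)))"
      by (rule amp_mmul[OF n k])
    also have "eqN (n^k) (amp n l k (mmul (n^l) (Mrep \<omega> L g) (Mrep \<omega> L h)))
                          (amp n l k (mscale (crep \<omega> g h) (Mrep \<omega> L (z2add g h))))"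
      by (rule amp_cong[OF n k]) (use rep_mul[OF wL L w] in \<open>simp add: L_def\<close>)
    finally show "eqN (n^k) (uhf_mul n (ut g) (ut h) k) (uhf_scale (c g h) (ut (z2add g h)) k)"
      unfolding uhf_mul_def uhf_scale_def ut_def c_def amp_mscale .
  qed
  have cu: "cmod (c g h) = 1" for g h unfolding c_def crep_def by (rule pw_unit[OF w])
  have pr: "proj_rep_lift n ut c" unfolding proj_rep_lift_def using unit rel cu by blast
  have "ob_scalar c = cnj (inverse \<omega>)" unfolding ob_scalar_def c_def crep_def
    by (simp add: power_int_minus)
  also have "\<dots> = \<omega>"
  proof -
    have "cnj \<omega> * \<omega> = 1" by (rule unit_cnj[OF w])
    then have "inverse \<omega> = cnj \<omega>" by (metis inverse_unique mult.commute)
    then show ?thesis by simp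
  qed
  finally show ?thesis using pr by blast
qed

theorem mainTheorem5:
  fixes n :: nat and \<omega> :: complex
  assumes "n \<ge> 1" and "cmod \<omega> = 1"
  shows "(\<exists>ut c. proj_rep_lift n ut c \<and> ob_scalar c = \<omega>) \<longleftrightarrow> (\<exists>l::nat. \<omega> ^ (n ^ l) = 1)"
proof
  assume "\<exists>ut c. proj_rep_lift n ut c \<and> ob_scalar c = \<omega>"
  then obtain ut c where "proj_rep_lift n ut c" "ob_scalar c = \<omega>" by blast
  then show "\<exists>l::nat. \<omega> ^ (n ^ l) = 1" using hard_dir[OF assms] by blast
next
  assume "\<exists>l::nat. \<omega> ^ (n ^ l) = 1"
  then obtain l where "\<omega> ^ (n ^ l) = 1" by blast
  then show "\<exists>ut c. proj_rep_lift n ut c \<and> ob_scalar c = \<omega>" using easy_dir[OF assms] by blast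
qed


end
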